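(* Let $H=H^{\dagger}\in\mathcal{M}_2(\mathbb{C})$ and let $A\in\mathcal{M}_3(\mathbb{C})$ be positive semidefinite with spectral decomposition $A=\sum_{k=1}^{3}\lambda_k A_k$ ($\lambda_k\geq 0$, $A_k$ rank-one spectral projectors). Define superoperators on $\mathcal{M}_2(\mathbb{C})$ by $\mathcal{L}_0(\rho)=-i[H,\rho]$, $\lambda_0=1$, and for $k=1,2,3$ $$\mathcal{L}_k(\rho)=\frac12\sum_{i,j=1}^{3}(A_k)_{ij}\big([\sigma_i,\rho\sigma_j]+[\sigma_i\rho,\sigma_j]\big),$$ set $\hat{\mathcal{L}}_k=\lambda_k\mathcal{L}_k$ ($k=0,\dots,3$) and $\Lambda=\max_{k}\|\hat{\mathcal{L}}_k\|_{1\to1}$. For $\alpha\geq0$ let $$S_2(\alpha)=e^{\frac{\alpha}{2}\hat{\mathcal{L}}_0}e^{\frac{\alpha}{2}\hat{\mathcal{L}}_1}e^{\frac{\alpha}{2}\hat{\mathcal{L}}_2}e^{\frac{\alpha}{2}\hat{\mathcal{L}}_3}e^{\frac{\alpha}{2}\hat{\mathcal{L}}_3}e^{\frac{\alpha}{2}\hat{\mathcal{L}}_2}e^{\frac{\alpha}{2}\hat{\mathcal{L}}_1}e^{\frac{\alpha}{2}\hat{\mathcal{L}}_0}.$$ Let $t>0$, let $N$ be a positive integer and $\tau=t/N$. Then $$\Big\|\exp\Big(\tau\sum_{k=0}^{3}\hat{\mathcal{L}}_k\Big)-S_2(\tau)\Big\|_{1\to1}\leq\frac{(4t\Lambda)^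3}{3N^3}.$$
   Context: $\sigma_1,\sigma_2,\sigma_3$ are the Pauli matrices. For a linear map $T$ on $\mathcal{M}_2(\mathbb{C})$, $\|T\|_{1\to1}=\sup_{\|X\|_1=1}\|T(X)\|_1$ with $\|X\|_1=\mathrm{tr}\sqrt{X^{\dagger}X}$, the supremum over all $X\in\mathcal{M}_2(\mathbb{C})$. Products of superoperators denote composition; exponentials are defined by power series. *)

theory Defs
  imports "HOL-Analysis.Analysis"
begin

type_synonym cmat2 = "complex^2^2"
type_synonym superop = "cmat2 \<Rightarrow> cmat2"

definition cadj :: "complex^'n^'n \<Rightarrow> complex^'n^'n" where
  "cadj X = (\<chi> i j. cnj (X$j$i))"

definition cscale :: "complex \<Rightarrow> complex^'n^'n \<Rightarrow> complex^'n^'n" where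
  "cscale c X = (\<chi> i j. c * X$i$j)"

definition comm :: "complex^'n^'n \<Rightarrow> complex^'n^'n \<Rightarrow> complex^'n^'n" where
  "comm X Y = X ** Y - Y ** X"

definition psd :: "complex^'n^'n \<Rightarrow> bool" where
  "psd X \<longleftrightarrow> cadj X = X \<and>
     (\<forall>v::complex^'n. 0 \<le> Re (\<Sum>i\<in>UNIV. \<Sum>j\<in>UNIV. cnj (v$i) * X$i$j * v$j))"

definition msqrt :: "complex^'n^'n \<Rightarrow> complex^'n^'n" where
  "msqrt X = (THE R. psd R \<and> R ** R = X)"

definition trace_norm :: "complex^'n^'n \<Rightarrow> real" where
  "trace_norm X = Re (trace (msqrt (cadj X ** X)))"

definition norm11 :: "superop \<Rightarrow> real" where
  "norm11 T = Sup {trace_norm (T X) | X. trace_norm X = 1}"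

definition sexp :: "superop \<Rightarrow> superop" where
  "sexp T = (\<lambda>X. \<Sum>n. (1 / fact n) *\<^sub>R (T ^^ n) X)"

text \<open>Pauli matrices sigma_1, sigma_2, sigma_3, indexed by the elements 1, 2, 3 of type 3.\<close>
definition sigma1 :: cmat2 where "sigma1 = vector [vector [0, 1], vector [1, 0]]"
definition sigma2 :: cmat2 where "sigma2 = vector [vector [0, -\<i>], vector [\<i>, 0]]"
definition sigma3 :: cmat2 where "sigma3 = vector [vector [1, 0], vector [0, -1]]"

definition pauli :: "3 \<Rightarrow> cmat2" where
  "pauli i = (if i = 1 then sigma1 else if i = 2 then sigma2 else sigma3)"

definition L0 :: "cmat2 \<Rightarrow> superop" where
  "L0 H = (\<lambda>\<rho>. cscale (-\<i>) (comm H \<rho>))"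

definition Lk :: "complex^3^3 \<Rightarrow> superop" where
  "Lk B = (\<lambda>\<rho>. cscale (1/2) (\<Sum>i\<in>UNIV. \<Sum>j\<in>UNIV.
      cscale (B$i$j) (comm (pauli i) (\<rho> ** pauli j) + comm (pauli i ** \<rho>) (pauli j))))"

definition outer :: "complex^3 \<Rightarrow> complex^3^3" where
  "outer v = (\<chi> i j. v$i * cnj (v$j))"

end

theory Submission
  imports Defs
begin

definition mat2 :: "complex \<Rightarrow> complex \<Rightarrow> complex \<Rightarrow> complex \<Rightarrow> cmat2" where
  "mat2 a b c d = vector [vector [a,b], vector [c,d]]"

lemma mat2_nth[simp]: "mat2 a b c d $1$1 = a" "mat2 a b c d $1$2 = b"
  "mat2 a b c d $2$1 = c" "mat2 a b c d $2$2 = d"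
  by (simp_all add: mat2_def)

lemma cm2_eq_iff: "(X::cmat2) = Y \<longleftrightarrow> X$1$1 = Y$1$1 \<and> X$1$2 = Y$1$2 \<and> X$2$1 = Y$2$1 \<and> X$2$2 = Y$2$2"
  by (auto simp: vec_eq_iff forall_2)

lemma mm2: "((X::'a::semiring_1^2^2) ** Y) $ i $ j = X$i$1 * Y$1$j + X$i$2 * Y$2$j"
  by (simp add: matrix_matrix_mult_def sum_2)

lemma trace2: "trace (X::'a::semiring_1^2^2) = X$1$1 + X$2$2"
  by (simp add: trace_def sum_2)

lemma cadj_nth[simp]: "cadj X $ i $ j = cnj (X $ j $ i)"
  by (simp add: cadj_def)

lemma cscale_nth[simp]: "cscale c X $ i $ j = c * X $ i $ j"
  by (simp add: cscale_def)

lemma mat_nth2[simp]: "(mat k :: 'a::zero^2^2) $1$1 = k" "(mat k :: 'a::zero^2^2) $1$2 = 0"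
   "(mat k :: 'a::zero^2^2) $2$1 = 0" "(mat k :: 'a::zero^2^2) $2$2 = k"
  by (simp_all add: mat_def)

lemmas m2 = cm2_eq_iff mm2 trace2

lemma real_of_cnj: "z = cnj z \<Longrightarrow> z = complex_of_real (Re z)"
  by (simp add: complex_eq_iff)

lemma cmod_sq: "(complex_of_real (cmod z))^2 = z * cnj z"
  by (metis complex_norm_square of_real_power)

lemma Re_zcnj: "Re (z * cnj z) = (cmod z)^2"
  by (metis Re_complex_of_real complex_norm_square)

lemma cmod_mult_self: "cmod z * cmod z = Re z * Re z + Im z * Im z"
  by (metis cmod_power2 power2_eq_square)

lemma Re_w_cnj: "Re (w + cnj w) = 2 * Re w"
  by simp

lemma Re_ofreal_mult: "Re (complex_of_real a * z) = a * Re z"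
  by simp

lemma psd2_imp:
  fixes R :: cmat2
  assumes "psd R"
  shows "R$2$1 = cnj (R$1$2) \<and> R$1$1 = of_real (Re (R$1$1)) \<and> R$2$2 = of_real (Re (R$2$2))
     \<and> 0 \<le> Re (R$1$1) \<and> 0 \<le> Re (R$2$2) \<and> (cmod (R$1$2))^2 \<le> Re (R$1$1) * Re (R$2$2)"
proof -
  have h: "cadj R = R" and q: "\<And>v::complex^2. 0 \<le> Re (\<Sum>i\<in>UNIV. \<Sum>j\<in>UNIV. cnj (v$i) * R$i$j * v$j)"
    using assms by (auto simp: psd_def)
  have e21: "R$2$1 = cnj (R$1$2)" using h by (metis cadj_nth complex_cnj_cnj)
  have e11: "R$1$1 = of_real (Re (R$1$1))" using h by (metis cadj_nth real_of_cnj)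
  have e22: "R$2$2 = of_real (Re (R$2$2))" using h by (metis cadj_nth real_of_cnj)
  define a where "a = Re (R$1$1)"
  define c where "c = Re (R$2$2)"
  define b where "b = R$1$2"
  have qf: "Re (\<Sum>i\<in>UNIV. \<Sum>j\<in>UNIV. cnj (v$i) * R$i$j * v$j) =
     a * (cmod (v$1))^2 + c * (cmod (v$2))^2 + 2 * Re (cnj (v$1) * b * v$2)" for v :: "complex^2"
  proof -
    have "(\<Sum>i\<in>UNIV. \<Sum>j\<in>UNIV. cnj (v$i) * R$i$j * v$j) =
       of_real a * (v$1 * cnj (v$1)) + of_real c * (v$2 * cnj (v$2)) + (cnj (v$1) * b * v$2 + cnj (cnj (v$1) * b * v$2))"
      apply (simp add: sum_2)
      apply (subst e11, subst e22, subst e21)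
      by (simp add: a_def b_def c_def algebra_simps)
    then show ?thesis by (simp only: Re_zcnj plus_complex.sel Re_ofreal_mult) (simp add: algebra_simps)
  qed
  have a0: "0 \<le> a" using q[of "vector [1,0]"] qf[of "vector [1,0]"] by simp
  have c0: "0 \<le> c" using q[of "vector [0,1]"] qf[of "vector [0,1]"] by simp
  have t1: "0 \<le> a * (a*c - (cmod b)^2)"
  proof -
    have "Re (cnj b * b * (- of_real a)) = - a * (cmod b)^2"
      by (simp add: cmod_mult_self power2_eq_square algebra_simps)
    then show ?thesis using q[of "vector [b, - of_real a]"] qf[of "vector [b, - of_real a]"]
      by (simp add: power2_eq_square algebra_simps)
  qed
  have t2: "0 \<le> c * (a*c - (cmod b)^2)"
  proof -
    have "Re (of_real c * b * (- cnj b)) = - c * (cmod b)^2"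
      by (simp add: cmod_mult_self power2_eq_square algebra_simps)
    then show ?thesis using q[of "vector [of_real c, - cnj b]"] qf[of "vector [of_real c, - cnj b]"]
      by (simp add: power2_eq_square algebra_simps)
  qed
  have t3: "a = 0 \<Longrightarrow> c = 0 \<Longrightarrow> cmod b = 0"
  proof -
    assume "a = 0" "c = 0"
    have "Re (b * (- cnj b)) = - ((cmod b)^2)"
      by (simp add: cmod_mult_self power2_eq_square algebra_simps)
    then have "0 \<le> - ((cmod b)^2)" using q[of "vector [1, - cnj b]"] qf[of "vector [1, - cnj b]"] \<open>a=0\<close> \<open>c=0\<close>
      by simp
    then show ?thesis by simp
  qed
  have "(cmod b)^2 \<le> a * c"
  proof (cases "a > 0")
    case True then show ?thesis using t1 by (simp add: zero_le_mult_iff)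
  next
    case False
    then have "a = 0" using a0 by simp
    show ?thesis
    proof (cases "c > 0")
      case True then show ?thesis using t2 by (simp add: zero_le_mult_iff)
    next
      case False then have "c = 0" using c0 by simp
      then show ?thesis using t3 \<open>a = 0\<close> by simp
    qed
  qed
  then show ?thesis using e11 e21 e22 a0 c0 by (simp add: a_def b_def c_def)
qed

lemma qf2:
  fixes R :: cmat2 and v :: "complex^2"
  assumes e21: "R$2$1 = cnj (R$1$2)" and e11: "R$1$1 = of_real a" and e22: "R$2$2 = of_real c"
  shows "Re (\<Sum>i\<in>UNIV. \<Sum>j\<in>UNIV. cnj (v$i) * R$i$j * v$j) =
     a * (cmod (v$1))^2 + c * (cmod (v$2))^2 + 2 * Re (cnj (v$1) * R$1$2 * v$2)"
proof -
  have eq: "(\<Sum>i\<in>UNIV. \<Sum>j\<in>UNIV. cnj (v$i) * R$i$j * v$j) =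
     of_real a * (v$1 * cnj (v$1)) + of_real c * (v$2 * cnj (v$2)) + (cnj (v$1) * R$1$2 * v$2 + cnj (cnj (v$1) * R$1$2 * v$2))"
    by (simp add: sum_2 e11 e22 e21 algebra_simps)
  show ?thesis by (simp only: eq Re_zcnj plus_complex.sel Re_ofreal_mult) (simp add: algebra_simps)
qed

lemma quad_nonneg:
  fixes a c x y beta :: real
  assumes "0 \<le> a" "0 \<le> c" "beta^2 \<le> a * c" "0 \<le> beta"
  shows "0 \<le> a * x^2 + c * y^2 - 2 * beta * x * y"
proof (cases "a = 0")
  case True
  then have "beta = 0" using assms by simp
  then show ?thesis using True assms by simp
next
  case False
  then have ap: "a > 0" using assms by simp
  have "a * (a * x^2 + c * y^2 - 2 * beta * x * y) = (a*x - beta*y)^2 + (a*c - beta^2) * y^2"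
    by (simp add: power2_eq_square algebra_simps)
  also have "\<dots> \<ge> 0" using assms by simp
  finally show ?thesis using ap by (simp add: zero_le_mult_iff)
qed

lemma psd2_intro:
  fixes R :: cmat2
  assumes e21: "R$2$1 = cnj (R$1$2)" and e11: "R$1$1 = of_real a" and e22: "R$2$2 = of_real c"
    and a0: "0 \<le> a" and c0: "0 \<le> c" and b: "(cmod (R$1$2))^2 \<le> a * c"
  shows "psd R"
  unfolding psd_def
proof
  show "cadj R = R" using e21 e11 e22 by (simp add: m2)
  show "\<forall>v::complex^2. 0 \<le> Re (\<Sum>i\<in>UNIV. \<Sum>j\<in>UNIV. cnj (v$i) * R$i$j * v$j)"
  proof
    fix v :: "complex^2"
    have r: "- (cmod (v$1) * cmod (R$1$2) * cmod (v$2)) \<le> Re (cnj (v$1) * R$1$2 * v$2)"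
    proof -
      have "\<bar>Re (cnj (v$1) * R$1$2 * v$2)\<bar> \<le> cmod (cnj (v$1) * R$1$2 * v$2)" by (rule abs_Re_le_cmod)
      also have "\<dots> = cmod (v$1) * cmod (R$1$2) * cmod (v$2)" by (simp add: norm_mult)
      finally show ?thesis by linarith
    qed
    have "0 \<le> a * (cmod (v$1))^2 + c * (cmod (v$2))^2 - 2 * cmod (R$1$2) * cmod (v$1) * cmod (v$2)"
      by (rule quad_nonneg) (use a0 c0 b in auto)
    moreover have "2 * cmod (R$1$2) * cmod (v$1) * cmod (v$2) = 2 * (cmod (v$1) * cmod (R$1$2) * cmod (v$2))"
      by simp
    ultimately show "0 \<le> Re (\<Sum>i\<in>UNIV. \<Sum>j\<in>UNIV. cnj (v$i) * R$i$j * v$j)"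
      using r qf2[OF e21 e11 e22, of v] by linarith
  qed
qed

definition sqrtm2 :: "cmat2 \<Rightarrow> cmat2" where
  "sqrtm2 M = (let p = Re (M$1$1); q = Re (M$2$2); m = M$1$2; d = sqrt (p*q - (cmod m)^2);
      s = sqrt (p + q + 2*d) in
     if s = 0 then 0 else mat2 (of_real ((p+d)/s)) (m / of_real s) (cnj m / of_real s) (of_real ((q+d)/s)))"

lemma sqrtm2_unique:
  fixes R :: cmat2
  assumes "psd R"
  shows "sqrtm2 (R ** R) = R"
proof -
  define a where "a = Re (R$1$1)"
  define c where "c = Re (R$2$2)"
  define b where "b = R$1$2"
  have e21: "R$2$1 = cnj b" and e11: "R$1$1 = of_real a" and e22: "R$2$2 = of_real c"
    and a0: "0 \<le> a" and c0: "0 \<le> c" and bb: "(cmod b)^2 \<le> a * c"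
    using psd2_imp[OF assms] by (simp_all add: a_def b_def c_def)
  define M where "M = R ** R"
  have M11: "M$1$1 = of_real (a^2 + (cmod b)^2)"
    by (simp add: M_def mm2 e11 e21 b_def[symmetric] cmod_sq[symmetric] power2_eq_square)
  have M22: "M$2$2 = of_real (c^2 + (cmod b)^2)"
    by (simp add: M_def mm2 e22 e21 b_def[symmetric] mult.commute[of "cnj b"] cmod_sq[symmetric] power2_eq_square)
  have M12: "M$1$2 = of_real (a + c) * b"
    by (simp add: M_def mm2 e11 e22 b_def algebra_simps)
  have cM12: "cmod (M$1$2) = (a + c) * cmod b"
    using a0 c0 by (simp only: M12 norm_mult norm_of_real abs_of_nonneg add_nonneg_nonneg)
  have dd: "(a^2 + (cmod b)^2) * (c^2 + (cmod b)^2) - ((a + c) * cmod b)^2 = (a*c - (cmod b)^2)^2"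
    by (simp add: power2_eq_square algebra_simps)
  have d: "sqrt ((a^2 + (cmod b)^2) * (c^2 + (cmod b)^2) - ((a + c) * cmod b)^2) = a*c - (cmod b)^2"
    using bb by (simp add: dd)
  have ss: "a^2 + (cmod b)^2 + (c^2 + (cmod b)^2) + 2 * (a*c - (cmod b)^2) = (a + c)^2"
    by (simp add: power2_eq_square algebra_simps)
  have s: "sqrt (a^2 + (cmod b)^2 + (c^2 + (cmod b)^2) + 2 * (a*c - (cmod b)^2)) = a + c"
    using a0 c0 by (subst ss) simp
  have form: "sqrtm2 M = (if a + c = 0 then 0 else
     mat2 (of_real ((a^2 + (cmod b)^2 + (a*c - (cmod b)^2)) / (a + c))) (M$1$2 / of_real (a + c))
          (cnj (M$1$2) / of_real (a + c)) (of_real ((c^2 + (cmod b)^2 + (a*c - (cmod b)^2)) / (a + c))))"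
    unfolding sqrtm2_def Let_def M11 M22 Re_complex_of_real cM12 d s by (rule refl)
  show ?thesis
  proof (cases "a + c = 0")
    case True
    then have "a = 0" "c = 0" using a0 c0 by auto
    then have "b = 0" using bb by simp
    then show ?thesis unfolding M_def[symmetric] form
      using True \<open>a = 0\<close> \<open>c = 0\<close> e11 e21 e22 b_def by (simp add: m2)
  next
    case False
    then have sp: "a + c > 0" using a0 c0 by simp
    have x1: "(a^2 + (cmod b)^2 + (a*c - (cmod b)^2)) / (a + c) = a"
      using sp by (simp add: field_simps power2_eq_square)
    have x2: "(c^2 + (cmod b)^2 + (a*c - (cmod b)^2)) / (a + c) = c"
      using sp by (simp add: field_simps power2_eq_square)
    have nz: "complex_of_real (a + c) \<noteq> 0" using sp by (simp only: of_real_eq_0_iff)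
    have x3: "of_real (a + c) * b / of_real (a + c) = b"
      by (metis nz nonzero_mult_div_cancel_left)
    have x4: "cnj (of_real (a + c) * b) / of_real (a + c) = cnj b"
      by (simp only: complex_cnj_mult complex_cnj_complex_of_real) (metis nz nonzero_mult_div_cancel_left)
    show ?thesis unfolding M_def[symmetric] form if_not_P[OF False] x1 x2 M12 x3 x4
      using e11 e21 e22 b_def by (simp add: m2)
  qed
qed


lemma sqrtm2_ok:
  fixes M :: cmat2
  assumes "psd M"
  shows "psd (sqrtm2 M) \<and> sqrtm2 M ** sqrtm2 M = M"
proof -
  define p where "p = Re (M$1$1)"
  define q where "q = Re (M$2$2)"
  define m where "m = M$1$2"
  have e21: "M$2$1 = cnj m" and e11: "M$1$1 = of_real p" and e22: "M$2$2 = of_real q"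
    and p0: "0 \<le> p" and q0: "0 \<le> q" and mm: "(cmod m)^2 \<le> p * q"
    using psd2_imp[OF assms] by (simp_all add: p_def q_def m_def)
  define d where "d = sqrt (p*q - (cmod m)^2)"
  define s where "s = sqrt (p + q + 2*d)"
  have d0: "0 \<le> d" using mm by (simp add: d_def)
  have dsq: "d^2 = p*q - (cmod m)^2" using mm by (simp add: d_def)
  have s0: "0 \<le> s" using p0 q0 d0 by (simp add: s_def)
  have ssq: "s^2 = p + q + 2*d" using p0 q0 d0 by (simp add: s_def)
  have form: "sqrtm2 M = (if s = 0 then 0 else mat2 (of_real ((p+d)/s)) (m / of_real s) (cnj m / of_real s) (of_real ((q+d)/s)))"
    unfolding sqrtm2_def Let_def p_def[symmetric] q_def[symmetric] m_def[symmetric] d_def[symmetric] s_def[symmetric]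
    by (rule refl)
  show ?thesis
  proof (cases "s = 0")
    case True
    then have "p + q + 2*d = 0" using ssq by simp
    then have "p = 0" "q = 0" using p0 q0 d0 by auto
    then have "m = 0" using mm by simp
    then have "M = 0" using e11 e21 e22 \<open>p = 0\<close> \<open>q = 0\<close> m_def by (simp add: m2)
    moreover have "psd (0::cmat2)" by (rule psd2_intro[where a=0 and c=0]) auto
    moreover have "sqrtm2 M = 0" using True form by simp
    moreover have "(0::cmat2) ** 0 = 0" by (simp add: m2)
    ultimately show ?thesis by simp
  next
    case False
    then have sp: "s > 0" using s0 by simp
    have nz: "complex_of_real s \<noteq> 0" using sp by (simp only: of_real_eq_0_iff)
    define R where "R = mat2 (of_real ((p+d)/s)) (m / of_real s) (cnj m / of_real s) (of_real ((q+d)/s))"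
    have RR: "sqrtm2 M = R" using False form R_def by simp
    have cm: "(cmod (m / of_real s))^2 = (cmod m)^2 / s^2"
      using sp by (simp add: norm_divide power_divide)
    have psdR: "psd R"
    proof (rule psd2_intro[where a="(p+d)/s" and c="(q+d)/s"])
      show "0 \<le> (p+d)/s" "0 \<le> (q+d)/s" using p0 q0 d0 sp by auto
      have "(cmod m)^2 \<le> (p+d)*(q+d)" using mm p0 q0 d0
        by (simp add: algebra_simps) (smt (verit) mult_nonneg_nonneg)
      then have "(cmod m)^2 / s^2 \<le> (p+d)*(q+d) / s^2" using sp by (simp add: divide_right_mono)
      then show "(cmod (R$1$2))^2 \<le> (p+d)/s * ((q+d)/s)"
        unfolding R_def mat2_nth cm by (simp add: power2_eq_square)
    qed (simp_all add: R_def)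
    have k1: "((p+d)/s)^2 + (cmod m)^2/s^2 = p"
    proof -
      have "((p+d)/s)^2 + (cmod m)^2/s^2 = ((p+d)^2 + (cmod m)^2) / s^2"
        by (simp add: power_divide add_divide_distrib[symmetric])
      also have "(p+d)^2 + (cmod m)^2 = p * s^2" using dsq ssq
        by (simp add: power2_eq_square algebra_simps)
      finally show ?thesis using sp by simp
    qed
    have k2: "((q+d)/s)^2 + (cmod m)^2/s^2 = q"
    proof -
      have "((q+d)/s)^2 + (cmod m)^2/s^2 = ((q+d)^2 + (cmod m)^2) / s^2"
        by (simp add: power_divide add_divide_distrib[symmetric])
      also have "(q+d)^2 + (cmod m)^2 = q * s^2" using dsq ssq
        by (simp add: power2_eq_square algebra_simps)
      finally show ?thesis using sp by simp
    qed
    have k3: "(p+d)/s + (q+d)/s = s"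
    proof -
      have "(p+d)/s + (q+d)/s = s^2 / s" using ssq by (simp add: add_divide_distrib[symmetric] algebra_simps)
      then show ?thesis using sp by (simp add: power2_eq_square)
    qed
    have c1: "m / of_real s * (cnj m / of_real s) = of_real ((cmod m)^2 / s^2)"
    proof -
      have "m / of_real s * (cnj m / of_real s) = (m * cnj m) / (of_real s)^2" by (simp add: power2_eq_square)
      also have "\<dots> = of_real ((cmod m)^2 / s^2)" by (simp add: cmod_sq[symmetric])
      finally show ?thesis .
    qed
    have c2: "cnj m / of_real s * (m / of_real s) = of_real ((cmod m)^2 / s^2)"
      using c1 by (simp add: mult.commute)
    have RR11: "(R ** R)$1$1 = M$1$1"
    proof -
      have "(R ** R)$1$1 = of_real (((p+d)/s)^2) + m / of_real s * (cnj m / of_real s)"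
        by (simp add: R_def mm2 power2_eq_square)
      also have "\<dots> = of_real (((p+d)/s)^2 + (cmod m)^2/s^2)" by (simp only: c1 of_real_add)
      finally show ?thesis by (simp only: k1 e11)
    qed
    have RR22: "(R ** R)$2$2 = M$2$2"
    proof -
      have "(R ** R)$2$2 = cnj m / of_real s * (m / of_real s) + of_real (((q+d)/s)^2)"
        by (simp add: R_def mm2 power2_eq_square)
      also have "\<dots> = of_real (((q+d)/s)^2 + (cmod m)^2/s^2)" by (simp only: c2 of_real_add add.commute)
      finally show ?thesis by (simp only: k2 e22)
    qed
    have RR12: "(R ** R)$1$2 = M$1$2"
    proof -
      have "(R ** R)$1$2 = of_real ((p+d)/s + (q+d)/s) * m / of_real s"
        by (simp add: R_def mm2 algebra_simps add_divide_distrib)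
      also have "\<dots> = m" by (simp only: k3) (metis nz nonzero_mult_div_cancel_left)
      finally show ?thesis by (simp add: m_def)
    qed
    have RR21: "(R ** R)$2$1 = M$2$1"
    proof -
      have "(R ** R)$2$1 = of_real ((p+d)/s + (q+d)/s) * cnj m / of_real s"
        by (simp add: R_def mm2 algebra_simps add_divide_distrib)
      also have "\<dots> = cnj m" by (simp only: k3) (metis nz nonzero_mult_div_cancel_left)
      finally show ?thesis by (simp add: e21)
    qed
    have "R ** R = M" using RR11 RR12 RR21 RR22 by (simp only: cm2_eq_iff)
    then show ?thesis using RR psdR by simp
  qed
qed


lemma sqrtm2_trace:
  fixes M :: cmat2
  assumes "psd M"
  shows "Re (trace (sqrtm2 M)) = sqrt (Re (M$1$1) + Re (M$2$2) + 2 * sqrt (Re (M$1$1) * Re (M$2$2) - (cmod (M$1$2))^2))"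
proof -
  define p where "p = Re (M$1$1)"
  define q where "q = Re (M$2$2)"
  define m where "m = M$1$2"
  have p0: "0 \<le> p" and q0: "0 \<le> q" and mm: "(cmod m)^2 \<le> p * q"
    using psd2_imp[OF assms] by (simp_all add: p_def q_def m_def)
  define d where "d = sqrt (p*q - (cmod m)^2)"
  define s where "s = sqrt (p + q + 2*d)"
  have d0: "0 \<le> d" using mm by (simp add: d_def)
  have s0: "0 \<le> s" using p0 q0 d0 by (simp add: s_def)
  have ssq: "s^2 = p + q + 2*d" using p0 q0 d0 by (simp add: s_def)
  have form: "sqrtm2 M = (if s = 0 then 0 else mat2 (of_real ((p+d)/s)) (m / of_real s) (cnj m / of_real s) (of_real ((q+d)/s)))"
    unfolding sqrtm2_def Let_def p_def[symmetric] q_def[symmetric] m_def[symmetric] d_def[symmetric] s_def[symmetric]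
    by (rule refl)
  have "Re (trace (sqrtm2 M)) = s"
  proof (cases "s = 0")
    case True then show ?thesis using form by (simp add: trace2)
  next
    case False
    then have sp: "s > 0" using s0 by simp
    have "(p+d)/s + (q+d)/s = s^2 / s" using ssq by (simp add: add_divide_distrib[symmetric] algebra_simps)
    then have "(p+d)/s + (q+d)/s = s" using sp by (simp add: power2_eq_square)
    then show ?thesis using form False by (simp add: trace2)
  qed
  then show ?thesis by (simp add: s_def d_def p_def q_def m_def)
qed

definition fro :: "cmat2 \<Rightarrow> real" where
  "fro X = (cmod (X$1$1))^2 + (cmod (X$1$2))^2 + (cmod (X$2$1))^2 + (cmod (X$2$2))^2"

definition d2 :: "cmat2 \<Rightarrow> complex" where
  "d2 X = X$1$1 * X$2$2 - X$1$2 * X$2$1"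

definition tnf :: "cmat2 \<Rightarrow> real" where
  "tnf X = sqrt (fro X + 2 * cmod (d2 X))"

lemma lagrange2:
  fixes x11 x12 x21 x22 :: complex
  shows "((cmod x11)^2 + (cmod x21)^2) * ((cmod x12)^2 + (cmod x22)^2) - (cmod (cnj x11 * x12 + cnj x21 * x22))^2
     = (cmod (x11 * x22 - x12 * x21))^2"
proof -
  have "complex_of_real (((cmod x11)^2 + (cmod x21)^2) * ((cmod x12)^2 + (cmod x22)^2) - (cmod (cnj x11 * x12 + cnj x21 * x22))^2)
     = (x11 * cnj x11 + x21 * cnj x21) * (x12 * cnj x12 + x22 * cnj x22) - (cnj x11 * x12 + cnj x21 * x22) * (x11 * cnj x12 + x21 * cnj x22)"
    by (simp add: cmod_sq)
  also have "\<dots> = (x11 * x22 - x12 * x21) * cnj (x11 * x22 - x12 * x21)"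
    by (simp add: algebra_simps)
  also have "\<dots> = complex_of_real ((cmod (x11 * x22 - x12 * x21))^2)"
    by (simp add: cmod_sq)
  finally show ?thesis by (simp only: of_real_eq_iff)
qed

lemma gram_psd: "psd (cadj X ** (X::cmat2))"
proof -
  define M where "M = cadj X ** X"
  have e11: "M$1$1 = of_real ((cmod (X$1$1))^2 + (cmod (X$2$1))^2)"
    by (simp add: M_def mm2 cmod_sq mult.commute)
  have e22: "M$2$2 = of_real ((cmod (X$1$2))^2 + (cmod (X$2$2))^2)"
    by (simp add: M_def mm2 cmod_sq mult.commute)
  have e12: "M$1$2 = cnj (X$1$1) * X$1$2 + cnj (X$2$1) * X$2$2"
    by (simp add: M_def mm2)
  have e21: "M$2$1 = cnj (M$1$2)"
    by (simp add: M_def mm2 mult.commute)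
  have "(cmod (M$1$2))^2 \<le> ((cmod (X$1$1))^2 + (cmod (X$2$1))^2) * ((cmod (X$1$2))^2 + (cmod (X$2$2))^2)"
    using lagrange2[of "X$1$1" "X$2$1" "X$1$2" "X$2$2"] zero_le_power2[of "cmod (X$1$1 * X$2$2 - X$1$2 * X$2$1)"]
    unfolding e12 by linarith
  then show ?thesis unfolding M_def[symmetric]
    by (intro psd2_intro[OF e21 e11 e22]) auto
qed

lemma trace_norm_formula: "trace_norm X = tnf X"
proof -
  define M where "M = cadj X ** X"
  have pM: "psd M" unfolding M_def by (rule gram_psd)
  have ms: "msqrt M = sqrtm2 M"
    unfolding msqrt_def
  proof (rule the_equality)
    show "psd (sqrtm2 M) \<and> sqrtm2 M ** sqrtm2 M = M" by (rule sqrtm2_ok[OF pM])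
    show "\<And>R. psd R \<and> R ** R = M \<Longrightarrow> R = sqrtm2 M"
      using sqrtm2_unique by metis
  qed
  have e11: "Re (M$1$1) = (cmod (X$1$1))^2 + (cmod (X$2$1))^2"
    by (simp add: M_def mm2 cmod_mult_self power2_eq_square algebra_simps)
  have e22: "Re (M$2$2) = (cmod (X$1$2))^2 + (cmod (X$2$2))^2"
    by (simp add: M_def mm2 cmod_mult_self power2_eq_square algebra_simps)
  have e12: "M$1$2 = cnj (X$1$1) * X$1$2 + cnj (X$2$1) * X$2$2"
    by (simp add: M_def mm2)
  have "Re (M$1$1) * Re (M$2$2) - (cmod (M$1$2))^2 = (cmod (d2 X))^2"
    unfolding e11 e22 e12 d2_def by (rule lagrange2)
  then have "sqrt (Re (M$1$1) * Re (M$2$2) - (cmod (M$1$2))^2) = cmod (d2 X)" by simp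
  then have "Re (trace (sqrtm2 M)) = sqrt (fro X + 2 * cmod (d2 X))"
    unfolding sqrtm2_trace[OF pM] by (simp add: e11 e22 fro_def algebra_simps)
  then show ?thesis by (simp add: trace_norm_def M_def[symmetric] ms tnf_def)
qed

lemma fro_nonneg: "0 \<le> fro X" by (simp add: fro_def)

lemma tnf_nonneg: "0 \<le> tnf X"
  by (simp add: tnf_def fro_def)

lemma tnf_sq: "(tnf X)^2 = fro X + 2 * cmod (d2 X)"
  by (simp add: tnf_def fro_def)

lemma norm_sq_fro: "(norm (X::cmat2))^2 = fro X"
  by (simp add: norm_vec_def L2_set_def sum_2 fro_def)

lemma norm_le_tnf: "norm (X::cmat2) \<le> tnf X"
proof -
  have "(norm X)^2 \<le> (tnf X)^2" by (simp add: norm_sq_fro tnf_sq)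
  then show ?thesis using tnf_nonneg by (simp add: power2_le_iff_abs_le)
qed

lemma d2_le: "2 * cmod (d2 X) \<le> fro X"
proof -
  have "cmod (d2 X) \<le> cmod (X$1$1) * cmod (X$2$2) + cmod (X$1$2) * cmod (X$2$1)"
    unfolding d2_def using norm_triangle_ineq4[of "X$1$1 * X$2$2" "X$1$2 * X$2$1"] by (simp add: norm_mult)
  moreover have "2 * (cmod (X$1$1) * cmod (X$2$2)) \<le> (cmod (X$1$1))^2 + (cmod (X$2$2))^2"
    using sum_squares_bound[of "cmod (X$1$1)" "cmod (X$2$2)"] by simp
  moreover have "2 * (cmod (X$1$2) * cmod (X$2$1)) \<le> (cmod (X$1$2))^2 + (cmod (X$2$1))^2"
    using sum_squares_bound[of "cmod (X$1$2)" "cmod (X$2$1)"] by simp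
  ultimately show ?thesis unfolding fro_def by linarith
qed

lemma tnf_le_norm: "tnf X \<le> sqrt 2 * norm (X::cmat2)"
proof -
  have "(tnf X)^2 \<le> (sqrt 2 * norm X)^2"
    using d2_le[of X] by (simp add: tnf_sq power_mult_distrib norm_sq_fro)
  then show ?thesis by (simp add: power2_le_iff_abs_le)
qed

lemma tnf_zero_iff: "tnf X = 0 \<longleftrightarrow> X = 0"
proof
  assume "tnf X = 0"
  then have "norm X = 0" using norm_le_tnf[of X] by simp
  then show "X = 0" by simp
next
  assume "X = 0" then show "tnf X = 0" by (simp add: tnf_def fro_def d2_def)
qed

lemma tnf_0[simp]: "tnf 0 = 0" by (simp add: tnf_zero_iff)

lemma Re_trace_le: "Re (trace Z) \<le> tnf (Z::cmat2)"
proof -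
  define a where "a = Re (Z$1$1)"
  define a' where "a' = Im (Z$1$1)"
  define b where "b = Re (Z$2$2)"
  define b' where "b' = Im (Z$2$2)"
  define u where "u = cmod (Z$1$2)"
  define w where "w = cmod (Z$2$1)"
  have dl: "a*b - a'*b' - u*w \<le> cmod (d2 Z)"
  proof -
    have "Re (d2 Z) = a*b - a'*b' - Re (Z$1$2 * Z$2$1)" by (simp add: d2_def a_def a'_def b_def b'_def)
    moreover have "Re (Z$1$2 * Z$2$1) \<le> u * w"
      by (metis complex_Re_le_cmod norm_mult u_def w_def)
    moreover have "Re (d2 Z) \<le> cmod (d2 Z)" by (rule complex_Re_le_cmod)
    ultimately show ?thesis by linarith
  qed
  have fr: "fro Z = a^2 + a'^2 + u^2 + w^2 + b^2 + b'^2"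
    by (simp add: fro_def cmod_power2 a_def a'_def b_def b'_def u_def w_def)
  have "(a + b)^2 \<le> (tnf Z)^2"
  proof -
    have h1: "0 \<le> (a' - b')^2 + (u - w)^2" by simp
    have h2: "(a' - b')^2 + (u - w)^2 = a'^2 + b'^2 + u^2 + w^2 - 2*(a'*b') - 2*(u*w)"
      by (simp add: power2_eq_square algebra_simps)
    have h3: "(a + b)^2 = a^2 + b^2 + 2*(a*b)" by (simp add: power2_eq_square algebra_simps)
    show ?thesis unfolding tnf_sq fr h3 using h1 h2 dl by linarith
  qed
  then have "a + b \<le> tnf Z" using tnf_nonneg by (simp add: power2_le_iff_abs_le)
  then show ?thesis by (simp add: trace2 a_def b_def)
qed


lemma mat2_eta: "(X::cmat2) = mat2 (X$1$1) (X$1$2) (X$2$1) (X$2$2)"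
  by (simp add: cm2_eq_iff)

lemma cadj_mult2: "cadj ((A::cmat2) ** B) = cadj B ** cadj A"
  by (simp add: m2 mult.commute add.commute)

lemma cadj_cadj[simp]: "cadj (cadj A) = A"
  by (simp add: cadj_def vec_eq_iff)

lemma cadj_mat1: "cadj (mat 1 :: cmat2) = mat 1"
  by (simp add: m2)

lemma fro_trace: "fro X = Re (trace (cadj X ** X))"
  by (simp add: fro_def trace2 mm2 cmod_mult_self power2_eq_square algebra_simps)

lemma d2_mult: "d2 ((A::cmat2) ** B) = d2 A * d2 B"
  by (simp add: d2_def mm2 algebra_simps)

lemma d2_cadj: "d2 (cadj A) = cnj (d2 A)"
  by (simp add: d2_def mult.commute)

lemma d2_mat1: "d2 (mat 1) = 1"
  by (simp add: d2_def)

lemma unitary_d2: assumes "cadj W ** W = mat 1" shows "cmod (d2 W) = 1"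
proof -
  have "cnj (d2 W) * d2 W = 1" using arg_cong[OF assms, of d2] by (simp add: d2_mult d2_cadj d2_mat1)
  then have "(complex_of_real (cmod (d2 W)))^2 = 1" by (simp add: cmod_sq mult.commute)
  then have "(cmod (d2 W))^2 = 1" by (metis of_real_eq_1_iff of_real_power)
  then show ?thesis using norm_ge_zero[of "d2 W"] by (simp add: power2_eq_1_iff)
qed

lemma tnf_unitary_left:
  assumes "cadj W ** W = mat 1"
  shows "tnf (W ** Z) = tnf Z"
proof -
  have "cadj (W ** Z) ** (W ** Z) = cadj Z ** ((cadj W ** W) ** Z)"
    unfolding cadj_mult2 by (simp only: matrix_mul_assoc)
  then have "fro (W ** Z) = fro Z"
    unfolding fro_trace assms by (simp add: matrix_mul_lid)
  moreover have "cmod (d2 (W ** Z)) = cmod (d2 Z)"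
    by (simp add: d2_mult norm_mult unitary_d2[OF assms])
  ultimately show ?thesis by (simp add: tnf_def)
qed

lemma tnf_uminus[simp]: "tnf (- X) = tnf X"
  by (simp add: tnf_def fro_def d2_def)

lemma Re_trace_unitary:
  assumes "cadj W ** W = mat 1"
  shows "Re (trace (W ** Z)) \<le> tnf Z"
  using Re_trace_le[of "W ** Z"] tnf_unitary_left[OF assms] by simp

lemma abs_Re_trace_unitary:
  assumes "cadj W ** W = mat 1"
  shows "\<bar>Re (trace (W ** Z))\<bar> \<le> tnf Z"
proof -
  have "Re (trace (W ** (- Z))) \<le> tnf (- Z)" by (rule Re_trace_unitary[OF assms])
  moreover have "W ** (- Z) = - (W ** Z)" by (simp add: m2)
  moreover have "trace (- (W ** Z)) = - trace (W ** Z)" by (simp add: trace2)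
  ultimately have "- Re (trace (W ** Z)) \<le> tnf Z" by simp
  then show ?thesis using Re_trace_unitary[OF assms, of Z] by linarith
qed

lemma psd_add: "psd A \<Longrightarrow> psd B \<Longrightarrow> psd ((A::cmat2) + B)"
  unfolding psd_def
proof safe
  assume "cadj A = A" "cadj B = B"
  then show "cadj (A + B) = A + B" by (simp add: cadj_def vec_eq_iff)
next
  fix v :: "complex^2"
  assume a: "\<forall>v. 0 \<le> Re (\<Sum>i\<in>UNIV. \<Sum>j\<in>UNIV. cnj (v $ i) * A $ i $ j * v $ j)"
     and b: "\<forall>v. 0 \<le> Re (\<Sum>i\<in>UNIV. \<Sum>j\<in>UNIV. cnj (v $ i) * B $ i $ j * v $ j)"
  have "(\<Sum>i\<in>UNIV. \<Sum>j\<in>UNIV. cnj (v $ i) * (A + B) $ i $ j * v $ j) =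
     (\<Sum>i\<in>UNIV. \<Sum>j\<in>UNIV. cnj (v $ i) * A $ i $ j * v $ j) + (\<Sum>i\<in>UNIV. \<Sum>j\<in>UNIV. cnj (v $ i) * B $ i $ j * v $ j)"
    by (simp add: sum_2 algebra_simps)
  then show "0 \<le> Re (\<Sum>i\<in>UNIV. \<Sum>j\<in>UNIV. cnj (v $ i) * (A + B) $ i $ j * v $ j)"
    using a[rule_format, of v] b[rule_format, of v] by simp
qed

lemma psd_scale: "psd A \<Longrightarrow> 0 \<le> t \<Longrightarrow> psd (cscale (complex_of_real t) (A::cmat2))"
  unfolding psd_def
proof safe
  assume "cadj A = A"
  then show "cadj (cscale (complex_of_real t) A) = cscale (complex_of_real t) A"
    by (simp add: m2)
next
  fix v :: "complex^2"
  assume a: "\<forall>v. 0 \<le> Re (\<Sum>i\<in>UNIV. \<Sum>j\<in>UNIV. cnj (v $ i) * A $ i $ j * v $ j)" and t: "0 \<le> t"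
  have "(\<Sum>i\<in>UNIV. \<Sum>j\<in>UNIV. cnj (v $ i) * cscale (complex_of_real t) A $ i $ j * v $ j) =
     complex_of_real t * (\<Sum>i\<in>UNIV. \<Sum>j\<in>UNIV. cnj (v $ i) * A $ i $ j * v $ j)"
    by (simp add: sum_2 algebra_simps)
  then show "0 \<le> Re (\<Sum>i\<in>UNIV. \<Sum>j\<in>UNIV. cnj (v $ i) * cscale (complex_of_real t) A $ i $ j * v $ j)"
    using a t by simp
qed

lemma psd_mat: "0 \<le> t \<Longrightarrow> psd (mat (complex_of_real t) :: cmat2)"
  by (rule psd2_intro[where a=t and c=t]) auto

lemma fro_c: "complex_of_real (fro X) = X$1$1 * cnj (X$1$1) + X$1$2 * cnj (X$1$2) + X$2$1 * cnj (X$2$1) + X$2$2 * cnj (X$2$2)"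
  by (simp add: fro_def cmod_sq)

lemma tnf_attain:
  "\<exists>W. cadj W ** W = mat 1 \<and> W ** cadj W = mat 1 \<and> Re (trace (W ** X)) = tnf X \<and> psd (W ** X)"
proof (cases "X = 0")
  case True
  have "psd (0::cmat2)" by (rule psd2_intro[where a=0 and c=0]) auto
  moreover have "(mat 1 :: cmat2) ** 0 = 0" by (simp add: m2)
  ultimately show ?thesis using True
    by (intro exI[of _ "mat 1"]) (simp add: cadj_mat1 matrix_mul_lid trace2)
next
  case False
  define r where "r = tnf X"
  have rp: "r > 0" using False tnf_nonneg[of X] tnf_zero_iff[of X] by (simp add: r_def)
  have rsq: "r^2 = fro X + 2 * cmod (d2 X)" by (simp add: r_def tnf_sq)
  define dd where "dd = d2 X"
  define ph where "ph = (if dd = 0 then 1 else cnj dd / of_real (cmod dd))"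
  have ph12: "ph * cnj ph = 1 \<and> ph * dd = of_real (cmod dd)"
  proof (cases "dd = 0")
    case True then show ?thesis by (simp add: ph_def)
  next
    case False
    then have nz: "complex_of_real (cmod dd) \<noteq> 0" by simp
    have sq: "cnj dd * dd = (complex_of_real (cmod dd))^2" by (simp add: cmod_sq mult.commute)
    have "ph * cnj ph = (cnj dd * dd) / (complex_of_real (cmod dd))^2"
      using False by (simp add: ph_def power2_eq_square)
    also have "\<dots> = 1" using nz by (simp add: sq)
    finally have 1: "ph * cnj ph = 1" .
    have "ph * dd = (cnj dd * dd) / complex_of_real (cmod dd)"
      using False by (simp add: ph_def)
    also have "\<dots> = of_real (cmod dd)" using nz by (simp add: sq power2_eq_square)
    finally show ?thesis using 1 by simp
  qed
  have ph1: "ph * cnj ph = 1" using ph12 by simp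
  have ph2: "ph * dd = of_real (cmod dd)" using ph12 by simp
  have ph3: "cnj ph * cnj dd = of_real (cmod dd)"
    using arg_cong[OF ph2, of cnj] by simp
  define a where "a = X$1$1"
  define b where "b = X$1$2"
  define c where "c = X$2$1"
  define d where "d = X$2$2"
  have Xe: "X = mat2 a b c d" by (simp add: a_def b_def c_def d_def cm2_eq_iff)
  have dde: "dd = a*d - b*c" by (simp add: dd_def d2_def a_def b_def c_def d_def)
  have froe: "complex_of_real (fro X) = a * cnj a + b * cnj b + c * cnj c + d * cnj d"
    by (simp add: fro_c a_def b_def c_def d_def)
  define N where "N = mat2 (cnj a + ph*d) (cnj c - ph*b) (cnj b - ph*c) (cnj d + ph*a)"
  define W where "W = cscale (complex_of_real (1/r)) N"
  have rr: "complex_of_real (r^2) = a * cnj a + b * cnj b + c * cnj c + d * cnj d + ph * (a*d - b*c) + cnj ph * (cnj a * cnj d - cnj b * cnj c)"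
  proof -
    have "complex_of_real (r^2) = complex_of_real (fro X) + of_real (cmod dd) + of_real (cmod dd)"
      by (simp add: rsq dd_def)
    also have "\<dots> = a * cnj a + b * cnj b + c * cnj c + d * cnj d + ph * dd + cnj ph * cnj dd"
      by (simp only: froe ph2 ph3)
    finally show ?thesis by (simp add: dde)
  qed
  have NN: "cadj N ** N = mat (complex_of_real (r^2))"
  proof -
    have e11: "(cadj N ** N)$1$1 = complex_of_real (r^2)" unfolding rr using ph1
      by (simp add: N_def mm2) algebra
    have e22: "(cadj N ** N)$2$2 = complex_of_real (r^2)" unfolding rr using ph1
      by (simp add: N_def mm2) algebra
    have e12: "(cadj N ** N)$1$2 = 0" using ph1
      by (simp add: N_def mm2) algebra
    have e21: "(cadj N ** N)$2$1 = 0" using ph1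
      by (simp add: N_def mm2) algebra
    show ?thesis using e11 e12 e21 e22 by (simp add: cm2_eq_iff)
  qed
  have NN': "N ** cadj N = mat (complex_of_real (r^2))"
  proof -
    have e11: "(N ** cadj N)$1$1 = complex_of_real (r^2)" unfolding rr using ph1
      by (simp add: N_def mm2) algebra
    have e22: "(N ** cadj N)$2$2 = complex_of_real (r^2)" unfolding rr using ph1
      by (simp add: N_def mm2) algebra
    have e12: "(N ** cadj N)$1$2 = 0" using ph1
      by (simp add: N_def mm2) algebra
    have e21: "(N ** cadj N)$2$1 = 0" using ph1
      by (simp add: N_def mm2) algebra
    show ?thesis using e11 e12 e21 e22 by (simp add: cm2_eq_iff)
  qed
  have NX: "N ** X = cadj X ** X + mat (complex_of_real (cmod dd))"
    unfolding ph2[symmetric] unfolding dde Xe by (simp add: N_def m2 algebra_simps)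
  have rinv: "complex_of_real (1/r) * complex_of_real (1/r) * complex_of_real (r^2) = 1"
    using rp by (simp add: power2_eq_square field_simps)
  have WW: "cadj W ** W = mat 1"
  proof -
    have "cadj W ** W = cscale (complex_of_real (1/r) * complex_of_real (1/r)) (cadj N ** N)"
      by (simp add: W_def m2 algebra_simps)
    then show ?thesis using rinv unfolding NN by (simp add: m2)
  qed
  have WW': "W ** cadj W = mat 1"
  proof -
    have "W ** cadj W = cscale (complex_of_real (1/r) * complex_of_real (1/r)) (N ** cadj N)"
      by (simp add: W_def m2 algebra_simps)
    then show ?thesis using rinv unfolding NN' by (simp add: m2)
  qed
  have WX: "W ** X = cscale (complex_of_real (1/r)) (cadj X ** X + mat (complex_of_real (cmod dd)))"
    unfolding NX[symmetric] by (simp add: W_def m2 algebra_simps)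
  have psdWX: "psd (W ** X)" unfolding WX
    using rp by (intro psd_scale psd_add gram_psd psd_mat) auto
  have "Re (trace (W ** X)) = (1/r) * (fro X + 2 * cmod dd)"
    unfolding WX by (simp add: trace2 fro_trace algebra_simps)
  also have "\<dots> = r" using rp by (simp add: rsq[symmetric] dd_def power2_eq_square)
  finally have "Re (trace (W ** X)) = tnf X" by (simp add: r_def)
  then show ?thesis using WW WW' psdWX by blast
qed

lemma tnf_triangle: "tnf (X + Y) \<le> tnf X + tnf Y"
proof -
  obtain W where W: "cadj W ** W = mat 1" "Re (trace (W ** (X + Y))) = tnf (X + Y)"
    using tnf_attain by blast
  have "W ** (X + Y) = W ** X + W ** Y" by (simp add: matrix_add_ldistrib)
  then have "tnf (X + Y) = Re (trace (W ** X)) + Re (trace (W ** Y))" using W(2) by (simp add: trace_add)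
  also have "\<dots> \<le> tnf X + tnf Y" using Re_trace_unitary[OF W(1)] by (simp add: add_mono)
  finally show ?thesis .
qed

lemma tnf_scaleR: "tnf (r *\<^sub>R X) = \<bar>r\<bar> * tnf X"
proof -
  have "fro (r *\<^sub>R X) = r^2 * fro X"
    by (simp only: fro_def vector_scaleR_component norm_scaleR) (simp add: power_mult_distrib algebra_simps)
  moreover have "cmod (d2 (r *\<^sub>R X)) = r^2 * cmod (d2 X)"
  proof -
    have "d2 (r *\<^sub>R X) = complex_of_real (r^2) * d2 X"
      by (simp only: d2_def vector_scaleR_component) (simp add: scaleR_conv_of_real power2_eq_square algebra_simps)
    then show ?thesis by (simp only: norm_mult norm_of_real) simp
  qed
  ultimately have "tnf (r *\<^sub>R X) = sqrt (r^2 * (fro X + 2 * cmod (d2 X)))" by (simp add: tnf_def algebra_simps)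
  then show ?thesis by (simp add: real_sqrt_mult tnf_def)
qed

lemma tnf_cscale: "tnf (cscale k X) = cmod k * tnf X"
proof -
  have "fro (cscale k X) = (cmod k)^2 * fro X" by (simp add: fro_def norm_mult power_mult_distrib algebra_simps)
  moreover have "cmod (d2 (cscale k X)) = (cmod k)^2 * cmod (d2 X)"
  proof -
    have "d2 (cscale k X) = k^2 * d2 X" by (simp add: d2_def power2_eq_square algebra_simps)
    then show ?thesis by (simp add: norm_mult norm_power)
  qed
  ultimately have "tnf (cscale k X) = sqrt ((cmod k)^2 * (fro X + 2 * cmod (d2 X)))" by (simp add: tnf_def algebra_simps)
  then show ?thesis by (simp add: real_sqrt_mult tnf_def)
qed

lemma tnf_diff_le: "tnf (X - Y) \<le> tnf X + tnf Y"
  using tnf_triangle[of X "- Y"] by simp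

lemma tnf_sum_le: "finite S \<Longrightarrow> tnf (sum f S) \<le> (\<Sum>i\<in>S. tnf (f i))"
proof (induction S rule: finite_induct)
  case empty then show ?case by simp
next
  case (insert x F)
  then show ?case using tnf_triangle[of "f x" "sum f F"] by simp
qed

lemma sR: "r *\<^sub>R (z::complex) = complex_of_real r * z"
  by (simp add: scaleR_conv_of_real)

definition Vv :: "complex^3 \<Rightarrow> cmat2" where
  "Vv v = mat2 (v$3) (v$1 - \<i> * v$2) (v$1 + \<i> * v$2) (- v$3)"

definition dissip :: "cmat2 \<Rightarrow> cmat2 \<Rightarrow> cmat2" where
  "dissip V \<rho> = V ** \<rho> ** cadj V - cscale (1/2) (cadj V ** V ** \<rho> + \<rho> ** (cadj V ** V))"

lemma pauli_nth:
  "pauli 1 = mat2 0 1 1 0" "pauli 2 = mat2 0 (-\<i>) \<i> 0" "pauli 3 = mat2 1 0 0 (-1)"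
  by (simp_all add: pauli_def sigma1_def sigma2_def sigma3_def mat2_def)

lemma Lk_outer: "Lk (outer v) \<rho> = dissip (Vv v) \<rho>"
proof -
  have e: "\<rho> = mat2 (\<rho>$1$1) (\<rho>$1$2) (\<rho>$2$1) (\<rho>$2$2)" by (simp add: cm2_eq_iff)
  show ?thesis
    apply (subst (1 2) e)
    apply (simp add: Lk_def dissip_def Vv_def outer_def comm_def sum_3 pauli_nth m2)
    apply (intro conjI)
    apply (simp_all add: field_simps)
    done
qed


lemma mm_diff_l: fixes A B C :: cmat2 shows "((A::cmat2) - B) ** C = A ** C - B ** C" by (subst cm2_eq_iff) (simp add: mm2 algebra_simps)
lemma mm_diff_r: fixes A B C :: cmat2 shows "(C::cmat2) ** (A - B) = C ** A - C ** B" by (subst cm2_eq_iff) (simp add: mm2 algebra_simps)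
lemma mm_add_l: fixes A B C :: cmat2 shows "((A::cmat2) + B) ** C = A ** C + B ** C" by (subst cm2_eq_iff) (simp add: mm2 algebra_simps)
lemma mm_add_r: fixes A B C :: cmat2 shows "(C::cmat2) ** (A + B) = C ** A + C ** B" by (subst cm2_eq_iff) (simp add: mm2 algebra_simps)
lemma mm_cscale_l: fixes A B C :: cmat2 shows "cscale k (A::cmat2) ** B = cscale k (A ** B)" by (subst cm2_eq_iff) (simp add: mm2 algebra_simps)
lemma mm_cscale_r: fixes A B C :: cmat2 shows "(A::cmat2) ** cscale k B = cscale k (A ** B)" by (subst cm2_eq_iff) (simp add: mm2 algebra_simps)
lemma mm_scaleR_r: fixes A B C :: cmat2 shows "(A::cmat2) ** (r *\<^sub>R B) = r *\<^sub>R (A ** B)" by (subst cm2_eq_iff) (simp add: mm2 sR algebra_simps)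
lemma cadj_diff: fixes A B C :: cmat2 shows "cadj ((A::cmat2) - B) = cadj A - cadj B" by (subst cm2_eq_iff) (simp add: mm2)
lemma trace_cscale: "trace (cscale k (A::cmat2)) = k * trace A" by (simp add: trace2 algebra_simps)
lemma trace_scaleR: "trace (r *\<^sub>R (A::cmat2)) = complex_of_real r * trace A" by (simp add: trace2 sR algebra_simps)
lemma trace_cadj: "trace (cadj (A::cmat2)) = cnj (trace A)" by (simp add: trace2)
lemma trace_diff: "trace ((A::cmat2) - B) = trace A - trace B" by (simp add: trace2)
lemma trace_addm: "trace ((A::cmat2) + B) = trace A + trace B" by (simp add: trace2)
lemma mm_lid: "mat 1 ** (A::cmat2) = A" by (subst cm2_eq_iff) (simp add: mm2)
lemma mm_rid: "(A::cmat2) ** mat 1 = A" by (subst cm2_eq_iff) (simp add: mm2)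
lemma trace_comm: fixes A B C :: cmat2 shows "trace ((A::cmat2) ** B) = trace (B ** A)" by (rule trace_mul_sym)

lemma psd_sandwich:
  assumes "psd (P::cmat2)"
  shows "0 \<le> Re (trace (M ** P ** cadj M))"
proof -
  have q: "\<And>v::complex^2. 0 \<le> Re (\<Sum>i\<in>UNIV. \<Sum>j\<in>UNIV. cnj (v$i) * P$i$j * v$j)"
    using assms by (simp add: psd_def)
  define v1 :: "complex^2" where "v1 = vector [cnj (M$1$1), cnj (M$1$2)]"
  define v2 :: "complex^2" where "v2 = vector [cnj (M$2$1), cnj (M$2$2)]"
  have "trace (M ** P ** cadj M) = (\<Sum>i\<in>UNIV. \<Sum>j\<in>UNIV. cnj (v1$i) * P$i$j * v1$j) + (\<Sum>i\<in>UNIV. \<Sum>j\<in>UNIV. cnj (v2$i) * P$i$j * v2$j)"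
    by (simp add: trace2 mm2 sum_2 v1_def v2_def algebra_simps)
  then show ?thesis using q[of v1] q[of v2] by simp
qed

lemma herm_trace_real:
  assumes "cadj B = B" "cadj P = (P::cmat2)"
  shows "Im (trace (B ** P)) = 0"
proof -
  have "cnj (trace (B ** P)) = trace (B ** P)"
    by (metis assms cadj_mult2 trace_cadj trace_comm)
  then show ?thesis by (metis complex_cnj_complex_of_real real_of_cnj Im_complex_of_real)
qed

definition diss :: "superop \<Rightarrow> bool" where
  "diss G \<longleftrightarrow> (\<forall>W P. cadj W ** W = mat 1 \<longrightarrow> W ** cadj W = mat 1 \<longrightarrow> psd P \<longrightarrow>
      Re (trace (W ** G (cadj W ** P))) \<le> 0)"

lemma diss_dissip: "diss (dissip V)"
  unfolding diss_def
proof (intro allI impI)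
  fix W P :: cmat2
  assume WW: "cadj W ** W = mat 1" and WW': "W ** cadj W = mat 1" and pP: "psd P"
  have hP: "cadj P = P" using pP by (simp add: psd_def)
  define A where "A = W ** V ** cadj W"
  define t1 where "t1 = trace (A ** P ** cadj V)"
  define t2 where "t2 = trace (cadj A ** A ** P)"
  define t3 where "t3 = trace (V ** P ** cadj V)"
  have e1: "trace (W ** (V ** (cadj W ** P) ** cadj V)) = t1"
    by (simp only: t1_def A_def matrix_mul_assoc)
  have aa: "cadj A ** A = W ** (cadj V ** V) ** cadj W"
  proof -
    have "cadj A ** A = W ** (cadj V ** ((cadj W ** W) ** (V ** cadj W)))"
      by (simp only: A_def cadj_mult2 cadj_cadj matrix_mul_assoc)
    also have "\<dots> = W ** (cadj V ** V) ** cadj W" by (simp only: WW mm_lid matrix_mul_assoc)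
    finally show ?thesis .
  qed
  have e2: "trace (W ** (cadj V ** V ** (cadj W ** P))) = t2"
    by (simp only: t2_def aa matrix_mul_assoc)
  have e3: "trace (W ** ((cadj W ** P) ** (cadj V ** V))) = t3"
  proof -
    have "trace (W ** ((cadj W ** P) ** (cadj V ** V))) = trace ((W ** cadj W) ** (P ** cadj V ** V))"
      by (simp only: matrix_mul_assoc)
    also have "\<dots> = trace (V ** (P ** cadj V))"
      by (simp only: WW' mm_lid trace_comm[of "P ** cadj V" V] matrix_mul_assoc)
    finally show ?thesis by (simp only: t3_def matrix_mul_assoc)
  qed
  have main: "trace (W ** dissip V (cadj W ** P)) = t1 - (1/2) * (t2 + t3)"
    unfolding dissip_def mm_diff_r mm_cscale_r trace_diff trace_cscale mm_add_r trace_addm e1 e2 e3 by simp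
  have pos: "0 \<le> Re (trace ((A - V) ** P ** cadj (A - V)))" by (rule psd_sandwich[OF pP])
  have ex: "trace ((A - V) ** P ** cadj (A - V)) = trace (A ** P ** cadj A) - t1 - trace (V ** P ** cadj A) + t3"
    by (simp only: cadj_diff mm_diff_l mm_diff_r trace_diff t1_def t3_def) (simp add: algebra_simps)
  have x1: "trace (A ** P ** cadj A) = t2"
  proof -
    have "trace (A ** P ** cadj A) = trace (A ** (P ** cadj A))" by (simp only: matrix_mul_assoc)
    also have "\<dots> = trace ((P ** cadj A) ** A)" by (rule trace_comm)
    also have "\<dots> = trace (P ** (cadj A ** A))" by (simp only: matrix_mul_assoc)
    also have "\<dots> = trace ((cadj A ** A) ** P)" by (rule trace_comm)
    finally show ?thesis by (simp only: t2_def)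
  qed
  have x2: "trace (V ** P ** cadj A) = cnj t1"
  proof -
    have "cadj (A ** P ** cadj V) = V ** P ** cadj A" by (simp only: cadj_mult2 cadj_cadj hP matrix_mul_assoc)
    then show ?thesis by (metis t1_def trace_cadj)
  qed
  have "0 \<le> Re t2 - 2 * Re t1 + Re t3" using pos unfolding ex x1 x2 by simp
  then show "Re (trace (W ** dissip V (cadj W ** P))) \<le> 0" unfolding main by simp
qed

lemma diss_ham:
  assumes hH: "cadj H = H"
  shows "diss (L0 H)"
  unfolding diss_def
proof (intro allI impI)
  fix W P :: cmat2
  assume WW: "cadj W ** W = mat 1" and WW': "W ** cadj W = mat 1" and pP: "psd P"
  have hP: "cadj P = P" using pP by (simp add: psd_def)
  define B where "B = W ** H ** cadj W"
  have hB: "cadj B = B" by (simp only: B_def cadj_mult2 cadj_cadj hH matrix_mul_assoc)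
  have e1: "trace (W ** (H ** (cadj W ** P))) = trace (B ** P)"
    by (simp only: B_def matrix_mul_assoc)
  have e2: "trace (W ** ((cadj W ** P) ** H)) = trace (P ** H)"
  proof -
    have "trace (W ** ((cadj W ** P) ** H)) = trace ((W ** cadj W) ** (P ** H))" by (simp only: matrix_mul_assoc)
    then show ?thesis by (simp only: WW' mm_lid)
  qed
  have "trace (W ** L0 H (cadj W ** P)) = - \<i> * (trace (B ** P) - trace (P ** H))"
    unfolding L0_def comm_def mm_cscale_r trace_cscale mm_diff_r trace_diff e1 e2 by simp
  moreover have "Im (trace (B ** P)) = 0" by (rule herm_trace_real[OF hB hP])
  moreover have "Im (trace (P ** H)) = 0" by (rule herm_trace_real[OF hP hH])
  ultimately show "Re (trace (W ** L0 H (cadj W ** P))) \<le> 0" by simp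
qed

lemma diss_add: "diss F \<Longrightarrow> diss G \<Longrightarrow> diss (\<lambda>X. F X + G X)"
  unfolding diss_def by (simp add: mm_add_r trace_addm) (meson add_nonpos_nonpos)

lemma diss_cscale: "diss F \<Longrightarrow> 0 \<le> t \<Longrightarrow> diss (\<lambda>X. cscale (complex_of_real t) (F X))"
  unfolding diss_def by (simp add: mm_cscale_r trace_cscale mult_nonneg_nonpos)

lemma diss_scaleR: "diss F \<Longrightarrow> 0 \<le> t \<Longrightarrow> diss (\<lambda>X. t *\<^sub>R F X)"
  unfolding diss_def by (simp add: mm_scaleR_r trace_scaleR mult_nonneg_nonpos)

lemma diss_sum: "finite S \<Longrightarrow> (\<And>k. k \<in> S \<Longrightarrow> diss (F k)) \<Longrightarrow> diss (\<lambda>X. \<Sum>k\<in>S. F k X)"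
proof (induction S rule: finite_induct)
  case empty
  then show ?case by (simp add: diss_def m2 trace2)
next
  case (insert x S)
  then show ?case using diss_add[of "F x" "\<lambda>X. \<Sum>k\<in>S. F k X"] by simp
qed

lemma diss_resolvent:
  assumes "diss G" "0 \<le> d"
  shows "tnf Y \<le> tnf (Y - d *\<^sub>R G Y)"
proof -
  obtain W where W: "cadj W ** W = mat 1" "W ** cadj W = mat 1" "Re (trace (W ** Y)) = tnf Y" "psd (W ** Y)"
    using tnf_attain by blast
  have Yr: "cadj W ** (W ** Y) = Y" by (simp only: matrix_mul_assoc W(1) mm_lid)
  have "Re (trace (W ** G Y)) \<le> 0"
    using assms(1) W(1,2,4) unfolding diss_def by (metis Yr)
  then have "tnf Y \<le> Re (trace (W ** (Y - d *\<^sub>R G Y)))"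
    using assms(2) W(3) by (simp add: mm_diff_r mm_scaleR_r trace_diff trace_scaleR mult_nonneg_nonpos)
  also have "\<dots> \<le> tnf (Y - d *\<^sub>R G Y)" by (rule Re_trace_unitary[OF W(1)])
  finally show ?thesis .
qed


lemma linear_L0: "linear (L0 H)"
proof (rule linearI)
  show "L0 H (x + y) = L0 H x + L0 H y" for x y
    unfolding L0_def comm_def by (subst cm2_eq_iff) (simp add: mm2 algebra_simps)
  show "L0 H (c *\<^sub>R x) = c *\<^sub>R L0 H x" for c x
    unfolding L0_def comm_def by (subst cm2_eq_iff) (simp add: mm2 sR algebra_simps)
qed

lemma linear_dissip: "linear (dissip V)"
proof (rule linearI)
  show "dissip V (x + y) = dissip V x + dissip V y" for x y
    unfolding dissip_def by (subst cm2_eq_iff) (simp add: mm2 algebra_simps)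
  show "dissip V (c *\<^sub>R x) = c *\<^sub>R dissip V x" for c x
    unfolding dissip_def by (subst cm2_eq_iff) (simp add: mm2 sR algebra_simps)
qed

lemma linear_cscale: "linear F \<Longrightarrow> linear (\<lambda>X. cscale k (F X :: cmat2))"
proof (rule linearI)
  assume F: "linear F"
  show "cscale k (F (x + y)) = cscale k (F x) + cscale k (F y)" for x y
    using linear_add[OF F, of x y] by (subst cm2_eq_iff) (simp add: algebra_simps)
  show "cscale k (F (c *\<^sub>R x)) = c *\<^sub>R cscale k (F x)" for c x
    using linear_scale[OF F, of c x] by (subst cm2_eq_iff) (simp add: sR algebra_simps)
qed

lemma linear_scaleR_fun: "linear F \<Longrightarrow> linear (\<lambda>X. r *\<^sub>R F X)"
  by (rule linearI) (simp_all add: linear_add linear_scale scaleR_add_right)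

lemma linear_sum_fun: "(\<And>k. k \<in> S \<Longrightarrow> linear (F k)) \<Longrightarrow> linear (\<lambda>X. \<Sum>k\<in>S. F k X)"
  by (rule linear_compose_sum) auto

definition bnd :: "superop \<Rightarrow> real \<Rightarrow> bool" where
  "bnd T c \<longleftrightarrow> (\<forall>X. tnf (T X) \<le> c * tnf X)"

lemma linear_bnd_ex:
  assumes "linear (T::superop)"
  shows "\<exists>c\<ge>0. bnd T c"
proof -
  obtain B where B: "\<And>x. norm (T x) \<le> B * norm x" using linear_bounded[OF assms] by blast
  have "tnf (T X) \<le> (sqrt 2 * \<bar>B\<bar>) * tnf X" for X
  proof -
    have "tnf (T X) \<le> sqrt 2 * norm (T X)" by (rule tnf_le_norm)
    also have "\<dots> \<le> sqrt 2 * (\<bar>B\<bar> * norm X)"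
      using B[of X] by (intro mult_left_mono) (auto intro: order_trans[OF _ mult_right_mono[of B "\<bar>B\<bar>"]])
    also have "\<dots> \<le> sqrt 2 * (\<bar>B\<bar> * tnf X)"
      by (intro mult_left_mono norm_le_tnf) auto
    finally show ?thesis by (simp add: algebra_simps)
  qed
  then show ?thesis unfolding bnd_def by (intro exI[of _ "sqrt 2 * \<bar>B\<bar>"]) auto
qed

lemma trace_norm_tnf: "trace_norm = tnf"
  by (rule ext) (rule trace_norm_formula)

definition X1 :: cmat2 where "X1 = mat2 1 0 0 0"

lemma tnf_X1: "tnf X1 = 1"
  by (simp add: X1_def tnf_def fro_def d2_def)

lemma norm11_set_ne: "{tnf (T X) | X. tnf X = 1} \<noteq> {}"
  using tnf_X1 by blast

lemma norm11_le:
  assumes "bnd T c"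
  shows "norm11 T \<le> c"
  unfolding norm11_def trace_norm_tnf
proof (rule cSup_least[OF norm11_set_ne])
  fix y assume "y \<in> {tnf (T X) | X. tnf X = 1}"
  then obtain X where "y = tnf (T X)" "tnf X = 1" by blast
  moreover have "tnf (T X) \<le> c * tnf X" using assms unfolding bnd_def by blast
  ultimately show "y \<le> c" by simp
qed

lemma norm11_bnd:
  assumes "linear T"
  shows "bnd T (norm11 T)"
  unfolding bnd_def
proof
  fix X
  obtain c where c: "c \<ge> 0" "bnd T c" using linear_bnd_ex[OF assms] by blast
  have bdd: "bdd_above {tnf (T X) | X. tnf X = 1}"
    unfolding bdd_above_def
  proof (intro exI[of _ c] ballI)
    fix y assume "y \<in> {tnf (T X) | X. tnf X = 1}"
    then obtain Z where "y = tnf (T Z)" "tnf Z = 1" by blast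
    moreover have "tnf (T Z) \<le> c * tnf Z" using c unfolding bnd_def by blast
    ultimately show "y \<le> c" by simp
  qed
  show "tnf (T X) \<le> norm11 T * tnf X"
  proof (cases "X = 0")
    case True
    then show ?thesis using linear_0[OF assms] by simp
  next
    case False
    define t where "t = tnf X"
    have tp: "t > 0" using False tnf_nonneg[of X] tnf_zero_iff[of X] by (simp add: t_def)
    define Y where "Y = (1/t) *\<^sub>R X"
    have "tnf Y = 1" using tp by (simp add: Y_def tnf_scaleR t_def)
    then have "tnf (T Y) \<le> norm11 T"
      unfolding norm11_def trace_norm_tnf by (intro cSup_upper[OF _ bdd]) blast
    moreover have "tnf (T Y) = tnf (T X) / t"
      using tp by (simp add: Y_def linear_scale[OF assms] tnf_scaleR)
    ultimately show ?thesis using tp by (simp add: t_def field_simps)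
  qed
qed

lemma norm11_nonneg:
  assumes "linear T"
  shows "0 \<le> norm11 T"
proof -
  have "tnf (T X1) \<le> norm11 T * tnf X1" using norm11_bnd[OF assms] unfolding bnd_def by blast
  then show ?thesis using tnf_X1 tnf_nonneg[of "T X1"] by simp
qed

lemma bnd_comp:
  assumes "bnd S a" "bnd T b" "0 \<le> a"
  shows "bnd (\<lambda>X. S (T X)) (a * b)"
  unfolding bnd_def
proof
  fix X
  have "tnf (S (T X)) \<le> a * tnf (T X)" using assms(1) unfolding bnd_def by blast
  also have "\<dots> \<le> a * (b * tnf X)" using assms(2,3) unfolding bnd_def by (simp add: mult_left_mono)
  finally show "tnf (S (T X)) \<le> a * b * tnf X" by (simp add: mult.assoc)
qed

lemma bnd_add:
  assumes "bnd S a" "bnd T b"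
  shows "bnd (\<lambda>X. S X + T X) (a + b)"
  unfolding bnd_def
proof
  fix X
  have "tnf (S X + T X) \<le> tnf (S X) + tnf (T X)" by (rule tnf_triangle)
  also have "\<dots> \<le> a * tnf X + b * tnf X" using assms unfolding bnd_def by (simp add: add_mono)
  finally show "tnf (S X + T X) \<le> (a + b) * tnf X" by (simp add: algebra_simps)
qed

lemma bnd_diff:
  assumes "bnd S a" "bnd T b"
  shows "bnd (\<lambda>X. S X - T X) (a + b)"
  unfolding bnd_def
proof
  fix X
  have "tnf (S X - T X) \<le> tnf (S X) + tnf (T X)" by (rule tnf_diff_le)
  also have "\<dots> \<le> a * tnf X + b * tnf X" using assms unfolding bnd_def by (simp add: add_mono)
  finally show "tnf (S X - T X) \<le> (a + b) * tnf X" by (simp add: algebra_simps)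
qed

lemma bnd_scaleR:
  assumes "bnd S a"
  shows "bnd (\<lambda>X. r *\<^sub>R S X) (\<bar>r\<bar> * a)"
  unfolding bnd_def
proof
  fix X
  have "tnf (S X) \<le> a * tnf X" using assms unfolding bnd_def by blast
  then show "tnf (r *\<^sub>R S X) \<le> \<bar>r\<bar> * a * tnf X"
    by (simp add: tnf_scaleR mult.assoc mult_left_mono)
qed

lemma bnd_mono:
  assumes "bnd S a" "a \<le> b"
  shows "bnd S b"
  unfolding bnd_def
proof
  fix X
  have "tnf (S X) \<le> a * tnf X" using assms unfolding bnd_def by blast
  also have "\<dots> \<le> b * tnf X" using assms(2) tnf_nonneg[of X] by (simp add: mult_right_mono)
  finally show "tnf (S X) \<le> b * tnf X" .
qed

lemma bnd_id: "bnd (\<lambda>X. X) 1" unfolding bnd_def by simp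

lemma bnd_sum: "finite S \<Longrightarrow> (\<And>k. k \<in> S \<Longrightarrow> bnd (F k) (c k)) \<Longrightarrow> bnd (\<lambda>X. \<Sum>k\<in>S. F k X) (\<Sum>k\<in>S. c k)"
proof (induction S rule: finite_induct)
  case empty then show ?case by (simp add: bnd_def)
next
  case (insert x S)
  then show ?case using bnd_add[of "F x" "c x" "\<lambda>X. \<Sum>k\<in>S. F k X" "\<Sum>k\<in>S. c k"] by simp
qed

typedef sop = "UNIV :: (cmat2 \<Rightarrow>\<^sub>L cmat2) set"
  morphisms rep_sop abs_sop by simp

lemmas abs_sop_inv[simp] = abs_sop_inverse[OF UNIV_I]
lemmas rep_sop_inv[simp] = rep_sop_inverse

lemma sop_eq_iff: "a = b \<longleftrightarrow> rep_sop a = rep_sop b"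
  by (simp add: rep_sop_inject)

instantiation sop :: real_normed_algebra_1
begin

definition zero_sop_def: "0 = abs_sop 0"
definition one_sop_def: "1 = abs_sop id_blinfun"
definition plus_sop_def: "a + b = abs_sop (rep_sop a + rep_sop b)"
definition minus_sop_def: "a - b = abs_sop (rep_sop a - rep_sop b)"
definition uminus_sop_def: "- a = abs_sop (- rep_sop a)"
definition times_sop_def: "a * b = abs_sop (rep_sop a o\<^sub>L rep_sop b)"
definition scaleR_sop_def: "scaleR r a = abs_sop (r *\<^sub>R rep_sop a)"
definition norm_sop_def: "norm a = norm (rep_sop a)"
definition sgn_sop_def: "sgn (a::sop) = inverse (norm a) *\<^sub>R a"
definition dist_sop_def: "dist (a::sop) b = norm (a - b)"
definition uniformity_sop_def: "(uniformity :: (sop \<times> sop) filter) = (INF e\<in>{0 <..}. principal {(x, y). dist x y < e})"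
definition open_sop_def: "open (U :: sop set) = (\<forall>x\<in>U. \<forall>\<^sub>F (x', y) in uniformity. x' = x \<longrightarrow> y \<in> U)"

lemma rep_zero[simp]: "rep_sop 0 = 0" by (simp add: zero_sop_def)
lemma rep_one[simp]: "rep_sop 1 = id_blinfun" by (simp add: one_sop_def)
lemma rep_plus[simp]: "rep_sop (a + b) = rep_sop a + rep_sop b" by (simp add: plus_sop_def)
lemma rep_minus[simp]: "rep_sop (a - b) = rep_sop a - rep_sop b" by (simp add: minus_sop_def)
lemma rep_uminus[simp]: "rep_sop (- a) = - rep_sop a" by (simp add: uminus_sop_def)
lemma rep_times[simp]: "rep_sop (a * b) = rep_sop a o\<^sub>L rep_sop b" by (simp add: times_sop_def)
lemma rep_scaleR[simp]: "rep_sop (r *\<^sub>R a) = r *\<^sub>R rep_sop a" by (simp add: scaleR_sop_def)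

instance
proof
  fix a b c :: sop and r s :: real
  show "a + b + c = a + (b + c)" by (simp add: sop_eq_iff algebra_simps)
  show "a + b = b + a" by (simp add: sop_eq_iff algebra_simps)
  show "0 + a = a" by (simp add: sop_eq_iff)
  show "- a + a = 0" by (simp add: sop_eq_iff)
  show "a - b = a + - b" by (simp add: sop_eq_iff)
  show "r *\<^sub>R (a + b) = r *\<^sub>R a + r *\<^sub>R b" by (simp add: sop_eq_iff algebra_simps)
  show "(r + s) *\<^sub>R a = r *\<^sub>R a + s *\<^sub>R a" by (simp add: sop_eq_iff algebra_simps)
  show "r *\<^sub>R s *\<^sub>R a = (r * s) *\<^sub>R a" by (simp add: sop_eq_iff)
  show "1 *\<^sub>R a = a" by (simp add: sop_eq_iff)
  show "a * b * c = a * (b * c)" by (simp add: sop_eq_iff blinfun_eqI)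
  show "(a + b) * c = a * c + b * c" by (simp add: sop_eq_iff blinfun_eqI blinfun.bilinear_simps)
  show "a * (b + c) = a * b + a * c" by (simp add: sop_eq_iff blinfun_eqI blinfun.bilinear_simps)
  show "1 * a = a" by (simp add: sop_eq_iff blinfun_eqI)
  show "a * 1 = a" by (simp add: sop_eq_iff blinfun_eqI)
  show "(0::sop) \<noteq> 1"
  proof
    assume "(0::sop) = 1"
    then have "(0::cmat2 \<Rightarrow>\<^sub>L cmat2) = id_blinfun" by (metis rep_one rep_zero)
    then have "blinfun_apply (0::cmat2 \<Rightarrow>\<^sub>L cmat2) X1 = blinfun_apply id_blinfun X1" by simp
    then have "X1 = 0" by simp
    then show False using tnf_X1 by simp
  qed
  show "r *\<^sub>R a * b = r *\<^sub>R (a * b)" by (simp add: sop_eq_iff blinfun_eqI blinfun.bilinear_simps)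
  show "a * r *\<^sub>R b = r *\<^sub>R (a * b)" by (simp add: sop_eq_iff blinfun_eqI blinfun.bilinear_simps)
  show "dist a b = norm (a - b)" by (simp add: dist_sop_def)
  show "sgn a = inverse (norm a) *\<^sub>R a" by (simp add: sgn_sop_def)
  show "(uniformity :: (sop \<times> sop) filter) = (INF e\<in>{0 <..}. principal {(x, y). dist x y < e})"
    by (simp add: uniformity_sop_def)
  show "open (U::sop set) = (\<forall>x\<in>U. \<forall>\<^sub>F (x', y) in uniformity. x' = x \<longrightarrow> y \<in> U)" for U
    by (simp add: open_sop_def)
  show "norm a = 0 \<longleftrightarrow> a = 0" by (simp add: norm_sop_def sop_eq_iff)
  show "norm (a + b) \<le> norm a + norm b" by (simp add: norm_sop_def norm_triangle_ineq)
  show "norm (r *\<^sub>R a) = \<bar>r\<bar> * norm a" by (simp add: norm_sop_def)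
  show "norm (1::sop) = 1" by (simp add: norm_sop_def)
  show "norm (a * b) \<le> norm a * norm b" by (simp add: norm_sop_def norm_blinfun_compose)
qed

end

lemma dist_sop: "dist a b = dist (rep_sop a) (rep_sop b)"
  by (simp add: dist_norm norm_sop_def)

instance sop :: banach
proof
  fix X :: "nat \<Rightarrow> sop"
  assume "Cauchy X"
  then have "Cauchy (\<lambda>n. rep_sop (X n))" unfolding Cauchy_def dist_sop .
  then obtain l where l: "(\<lambda>n. rep_sop (X n)) \<longlonglongrightarrow> l" by (auto simp: convergent_def Cauchy_convergent_iff)
  have "X \<longlonglongrightarrow> abs_sop l" using l unfolding lim_sequentially dist_sop by simp
  then show "convergent X" by (auto simp: convergent_def)
qed

definition app :: "sop \<Rightarrow> cmat2 \<Rightarrow> cmat2" where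
  "app a X = blinfun_apply (rep_sop a) X"

definition mk :: "superop \<Rightarrow> sop" where
  "mk T = abs_sop (Blinfun T)"

lemma app_mk: "linear T \<Longrightarrow> app (mk T) = T"
  by (rule ext) (simp add: app_def mk_def bounded_linear_Blinfun_apply linear_conv_bounded_linear[symmetric])

lemma app_mult: "app (a * b) X = app a (app b X)" by (simp add: app_def)
lemma app_one[simp]: "app 1 X = X" by (simp add: app_def)
lemma app_zero[simp]: "app 0 X = 0" by (simp add: app_def)
lemma app_add: "app (a + b) X = app a X + app b X" by (simp add: app_def blinfun.bilinear_simps)
lemma app_diff: "app (a - b) X = app a X - app b X" by (simp add: app_def blinfun.bilinear_simps)
lemma app_scaleR: "app (r *\<^sub>R a) X = r *\<^sub>R app a X" by (simp add: app_def blinfun.bilinear_simps)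
lemma app_sum: "app (\<Sum>k\<in>S. f k) X = (\<Sum>k\<in>S. app (f k) X)"
  by (induction S rule: infinite_finite_induct) (simp_all add: app_add)
lemma app_linear: "linear (app a)"
  unfolding app_def by (rule bounded_linear.linear) (rule blinfun.bounded_linear_right)
lemma app_power: "app (a ^ n) X = (app a ^^ n) X"
  by (induction n arbitrary: X) (simp_all add: app_mult)
lemma norm_app: "norm (app a X) \<le> norm a * norm X"
  by (simp add: app_def norm_sop_def norm_blinfun)

lemma bl_app: "bounded_linear (\<lambda>a. app a X)"
  by (rule bounded_linear_intro[where K="norm X"]) (simp_all add: app_add app_scaleR norm_app)

lemma app_exp: "app (exp a) X = sexp (app a) X"
proof -
  have s: "summable (\<lambda>n. a ^ n /\<^sub>R fact n)" by (rule summable_exp_generic)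
  have "app (exp a) X = (\<Sum>n. app (a ^ n /\<^sub>R fact n) X)"
    unfolding exp_def by (rule bounded_linear.suminf[OF bl_app s])
  also have "\<dots> = (\<Sum>n. (1 / fact n) *\<^sub>R (app a ^^ n) X)"
    by (simp add: app_scaleR app_power divide_inverse)
  finally show ?thesis by (simp add: sexp_def)
qed

lemma R_bound:
  fixes A :: sop
  assumes d0: "0 \<le> d" and d1: "d \<le> 1"
  shows "norm ((1 - d *\<^sub>R A) * exp (d *\<^sub>R A) - 1) \<le> d * (d * ((norm A)^2 * exp (norm A)))"
proof -
  define f where "f u = (1 - u *\<^sub>R A) * exp (u *\<^sub>R A)" for u :: real
  define f' where "f' u = - (u *\<^sub>R (A * exp (u *\<^sub>R A) * A))" for u :: real
  have der: "(f has_vector_derivative f' u) (at u within S)" for u S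
  proof -
    have d1: "((\<lambda>u. 1 - u *\<^sub>R A) has_vector_derivative - A) (at u within S)"
      by (auto intro!: derivative_eq_intros)
    have "((\<lambda>u. (1 - u *\<^sub>R A) * exp (u *\<^sub>R A)) has_vector_derivative
        (1 - u *\<^sub>R A) * (exp (u *\<^sub>R A) * A) + (- A) * exp (u *\<^sub>R A)) (at u within S)"
      by (rule has_vector_derivative_mult[OF d1 exp_scaleR_has_vector_derivative_right])
    moreover have "(1 - u *\<^sub>R A) * (exp (u *\<^sub>R A) * A) + (- A) * exp (u *\<^sub>R A) = f' u"
      by (simp add: f'_def algebra_simps exp_times_scaleR_commute)
    moreover have "f = (\<lambda>u. (1 - u *\<^sub>R A) * exp (u *\<^sub>R A))" by (rule ext) (simp add: f_def)
    ultimately show ?thesis by simp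
  qed
  have B: "norm (f' u - f' 0) \<le> d * ((norm A)^2 * exp (norm A))" if "u \<in> {0..d}" for u
  proof -
    have u: "0 \<le> u" "u \<le> d" using that by auto
    have "norm (f' u - f' 0) = u * norm (A * exp (u *\<^sub>R A) * A)" using u by (simp add: f'_def)
    also have "\<dots> \<le> u * (norm A * norm (exp (u *\<^sub>R A)) * norm A)"
    proof -
      have "norm (A * exp (u *\<^sub>R A) * A) \<le> norm (A * exp (u *\<^sub>R A)) * norm A" by (rule norm_mult_ineq)
      also have "\<dots> \<le> norm A * norm (exp (u *\<^sub>R A)) * norm A" by (intro mult_right_mono norm_mult_ineq) auto
      finally show ?thesis using u by (intro mult_left_mono) auto
    qed
    also have "norm (exp (u *\<^sub>R A)) \<le> exp (norm A)"
    proof -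
      have "norm (exp (u *\<^sub>R A)) \<le> exp (norm (u *\<^sub>R A))" by (rule norm_exp)
      also have "norm (u *\<^sub>R A) \<le> norm A" using u d1 by (simp add: mult_left_le_one_le)
      then have "exp (norm (u *\<^sub>R A)) \<le> exp (norm A)" by simp
      finally show ?thesis .
    qed
    then have "norm (exp (u *\<^sub>R A)) * (norm A)^2 \<le> exp (norm A) * (norm A)^2"
      by (rule mult_right_mono) auto
    then have "norm A * norm (exp (u *\<^sub>R A)) * norm A \<le> (norm A)^2 * exp (norm A)"
      by (simp add: power2_eq_square algebra_simps)
    then have "u * (norm A * norm (exp (u *\<^sub>R A)) * norm A) \<le> d * ((norm A)^2 * exp (norm A))"
      using u by (rule_tac mult_mono) auto
    finally show ?thesis .
  qed
  have "norm (f d - f 0 - (d - 0) *\<^sub>R f' 0) \<le> norm (d - 0) * (d * ((norm A)^2 * exp (norm A)))"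
    by (rule vector_differentiable_bound_linearization[where S="{0..d}"])
       (use der B d0 in \<open>auto simp: closed_segment_eq_real_ivl\<close>)
  then show ?thesis using d0 by (simp add: f_def f'_def)
qed

lemma exp_nat_mult: "exp (of_nat n * (x::'a::{real_normed_algebra_1,banach})) = exp x ^ n"
proof (induction n)
  case 0 then show ?case by simp
next
  case (Suc n)
  have c: "x * (of_nat n * x) = (of_nat n * x) * x" by (simp add: mult_of_nat_commute mult.assoc)
  have "of_nat (Suc n) * x = x + of_nat n * x" by (simp add: distrib_right)
  then have "exp (of_nat (Suc n) * x) = exp x * exp (of_nat n * x)" by (simp add: exp_add_commuting[OF c])
  then show ?case using Suc by simp
qed

context
  fixes G :: superop
  assumes linG: "linear G" and dG: "diss G"
begin

lemma contr_step:
  assumes d0: "0 \<le> d" and d1: "d \<le> 1"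
  shows "tnf (app (exp (d *\<^sub>R mk G)) Z) \<le> (1 + sqrt 2 * (d * (d * ((norm (mk G))^2 * exp (norm (mk G)))))) * tnf Z"
proof -
  define A where "A = mk G"
  have aA: "app A = G" by (simp add: A_def app_mk linG)
  define E where "E = exp (d *\<^sub>R A)"
  define R where "R = (1 - d *\<^sub>R A) * E - 1"
  define Y where "Y = app E Z"
  have "tnf Y \<le> tnf (Y - d *\<^sub>R G Y)" by (rule diss_resolvent[OF dG d0])
  also have "Y - d *\<^sub>R G Y = Z + app R Z"
  proof -
    have "R = E - d *\<^sub>R (A * E) - 1" by (simp add: R_def algebra_simps)
    then have "app R Z = Y - d *\<^sub>R G Y - Z" by (simp add: app_diff app_scaleR app_mult aA Y_def)
    then show ?thesis by simp
  qed
  also have "tnf (Z + app R Z) \<le> tnf Z + tnf (app R Z)" by (rule tnf_triangle)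
  also have "tnf (app R Z) \<le> sqrt 2 * (norm R * tnf Z)"
  proof -
    have "tnf (app R Z) \<le> sqrt 2 * norm (app R Z)" by (rule tnf_le_norm)
    also have "norm (app R Z) \<le> norm R * norm Z" by (rule norm_app)
    also have "\<dots> \<le> norm R * tnf Z" by (intro mult_left_mono norm_le_tnf) auto
    finally show ?thesis by simp
  qed
  also have "norm R \<le> d * (d * ((norm A)^2 * exp (norm A)))"
    unfolding R_def E_def by (rule R_bound[OF d0 d1])
  finally have "tnf Y \<le> tnf Z + sqrt 2 * (d * (d * ((norm A)^2 * exp (norm A))) * tnf Z)"
    using tnf_nonneg[of Z] by (simp add: mult_right_mono)
  then show ?thesis by (simp add: Y_def E_def A_def algebra_simps)
qed

lemma contraction:
  assumes s0: "0 \<le> s"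
  shows "tnf (app (exp (s *\<^sub>R mk G)) X) \<le> tnf X"
proof -
  define A where "A = mk G"
  define K where "K = sqrt 2 * ((norm A)^2 * exp (norm A))"
  have K0: "0 \<le> K" by (simp add: K_def)
  have bound: "tnf (app (exp (s *\<^sub>R A)) X) \<le> exp (K * s^2 / real n) * tnf X" if n: "n \<ge> 1" "s \<le> real n" for n
  proof -
    define d where "d = s / real n"
    have d0: "0 \<le> d" using s0 by (simp add: d_def)
    have d1: "d \<le> 1" using n by (simp add: d_def)
    have step: "tnf (app (exp (d *\<^sub>R A)) Z) \<le> (1 + K * d^2) * tnf Z" for Z
      using contr_step[OF d0 d1, of Z] by (simp add: A_def K_def power2_eq_square algebra_simps)
    have pw: "tnf (app (exp (d *\<^sub>R A) ^ m) X) \<le> (1 + K * d^2)^m * tnf X" for m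
    proof (induction m)
      case 0 then show ?case by simp
    next
      case (Suc m)
      have "tnf (app (exp (d *\<^sub>R A) ^ Suc m) X) = tnf (app (exp (d *\<^sub>R A)) (app (exp (d *\<^sub>R A) ^ m) X))"
        by (simp add: app_mult)
      also have "\<dots> \<le> (1 + K * d^2) * tnf (app (exp (d *\<^sub>R A) ^ m) X)" by (rule step)
      also have "\<dots> \<le> (1 + K * d^2) * ((1 + K * d^2)^m * tnf X)"
        using Suc K0 by (intro mult_left_mono) auto
      finally show ?case by simp
    qed
    have "exp (s *\<^sub>R A) = exp (of_nat n * (d *\<^sub>R A))"
    proof -
      have "of_nat n * (d *\<^sub>R A) = (real n * d) *\<^sub>R A"
        by (simp only: scaleR_conv_of_real of_real_mult of_real_of_nat_eq mult.assoc)
      also have "real n * d = s" using n by (simp add: d_def)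
      finally show ?thesis by simp
    qed
    also have "\<dots> = exp (d *\<^sub>R A) ^ n" by (rule exp_nat_mult)
    finally have "tnf (app (exp (s *\<^sub>R A)) X) \<le> (1 + K * d^2)^n * tnf X" using pw by simp
    also have "(1 + K * d^2)^n \<le> exp (K * d^2)^n"
      using K0 by (intro power_mono) auto
    also have "exp (K * d^2)^n = exp (K * s^2 / real n)"
    proof -
      have "exp (K * d^2)^n = exp (real n * (K * d^2))" by (simp add: exp_of_nat_mult)
      also have "real n * (K * d^2) = K * s^2 / real n" using n by (simp add: d_def power2_eq_square field_simps)
      finally show ?thesis .
    qed
    finally show ?thesis using tnf_nonneg[of X] by (simp add: mult_right_mono)
  qed
  have lim0: "(\<lambda>n. exp (K * s^2 / real n) * tnf X) \<longlonglongrightarrow> exp 0 * tnf X"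
    by (intro tendsto_intros)
  then have lim: "(\<lambda>n. exp (K * s^2 / real n) * tnf X) \<longlonglongrightarrow> tnf X" by simp
  show ?thesis
  proof (rule LIMSEQ_le_const[OF lim])
    obtain N :: nat where N: "s \<le> real N" using real_arch_simple by blast
    show "\<exists>N. \<forall>n\<ge>N. tnf (app (exp (s *\<^sub>R mk G)) X) \<le> exp (K * s^2 / real n) * tnf X"
    proof (intro exI[of _ "Suc N"] allI impI)
      fix n assume "Suc N \<le> n"
      then have "n \<ge> 1" "s \<le> real n" using N by auto
      then show "tnf (app (exp (s *\<^sub>R mk G)) X) \<le> exp (K * s^2 / real n) * tnf X"
        using bound by (simp add: A_def)
    qed
  qed
qed

end

lemma taylor3_sop:
  fixes F :: "nat \<Rightarrow> real \<Rightarrow> sop" and l :: "sop \<Rightarrow> real"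
  assumes bl: "bounded_linear l"
    and der: "\<And>m t. m < 3 \<Longrightarrow> (F m has_vector_derivative F (Suc m) t) (at t)"
    and x: "0 < x"
  shows "\<exists>t. 0 < t \<and> t < x \<and>
    l (F 0 x) = l (F 0 0) + l (F 1 0) * x + l (F 2 0) / 2 * x^2 + l (F 3 t) / 6 * x^3"
proof -
  define diff where "diff = (\<lambda>(m::nat) (t::real). l (F m t))"
  have D: "\<forall>m t. m < 3 \<and> 0 \<le> t \<and> t \<le> x \<longrightarrow> DERIV (diff m) t :> diff (Suc m) t"
  proof (intro allI impI)
    fix m :: nat and t :: real assume "m < 3 \<and> 0 \<le> t \<and> t \<le> x"
    then have "(F m has_vector_derivative F (Suc m) t) (at t)" using der by blast
    then have "((\<lambda>t. l (F m t)) has_vector_derivative l (F (Suc m) t)) (at t)"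
      by (rule bounded_linear.has_vector_derivative[OF bl])
    then show "DERIV (diff m) t :> diff (Suc m) t"
      unfolding diff_def has_real_derivative_iff_has_vector_derivative by simp
  qed
  obtain t where t: "0 < t" "t < x"
    "diff 0 x = (\<Sum>m<3. diff m 0 / fact m * (x - 0)^m) + diff 3 t / fact 3 * (x - 0)^3"
    using Taylor[of 3 diff "diff 0" 0 x 0 x, OF _ refl D] x by auto
  have "(\<Sum>m<3. diff m 0 / fact m * (x - 0)^m) = diff 0 0 + diff 1 0 * x + diff 2 0 / 2 * x^2"
    by (simp add: numeral_3_eq_3 lessThan_Suc fact_numeral eval_nat_numeral)
  moreover have "(fact 3 :: real) = 6" by (simp add: fact_numeral)
  ultimately show ?thesis using t by (intro exI[of _ t]) (simp add: diff_def)
qed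

definition ee :: "nat \<Rightarrow> sop \<Rightarrow> real \<Rightarrow> sop" where
  "ee j b s = exp (s *\<^sub>R b) * b ^ j"

lemma ee_der: "((ee j b) has_vector_derivative ee (Suc j) b s) (at s)"
proof -
  have "((\<lambda>s. exp (s *\<^sub>R b) * b ^ j) has_vector_derivative (exp (s *\<^sub>R b) * b) * b ^ j) (at s)"
    by (rule has_vector_derivative_mult_left[OF exp_scaleR_has_vector_derivative_right])
  moreover have "(\<lambda>s. exp (s *\<^sub>R b) * b ^ j) = ee j b" by (rule ext) (simp add: ee_def)
  moreover have "(exp (s *\<^sub>R b) * b) * b ^ j = ee (Suc j) b s" by (simp add: ee_def mult.assoc)
  ultimately show ?thesis by simp
qed

lemma prod_der:
  assumes "(f has_vector_derivative f') (at s)" "(g has_vector_derivative g') (at s)"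
  shows "((\<lambda>s. f s * g s :: sop) has_vector_derivative f s * g' + f' * g s) (at s)"
  by (rule has_vector_derivative_mult[OF assms])

primrec Q0 :: "sop list \<Rightarrow> real \<Rightarrow> sop" where
  "Q0 [] s = 1"
| "Q0 (b # bs) s = ee 0 b s * Q0 bs s"

primrec Q1 :: "sop list \<Rightarrow> real \<Rightarrow> sop" where
  "Q1 [] s = 0"
| "Q1 (b # bs) s = ee 1 b s * Q0 bs s + ee 0 b s * Q1 bs s"

primrec Q2 :: "sop list \<Rightarrow> real \<Rightarrow> sop" where
  "Q2 [] s = 0"
| "Q2 (b # bs) s = ee 2 b s * Q0 bs s + ee 1 b s * Q1 bs s + ee 1 b s * Q1 bs s + ee 0 b s * Q2 bs s"

primrec Q3 :: "sop list \<Rightarrow> real \<Rightarrow> sop" where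
  "Q3 [] s = 0"
| "Q3 (b # bs) s = ee 3 b s * Q0 bs s + ee 2 b s * Q1 bs s + ee 2 b s * Q1 bs s + ee 2 b s * Q1 bs s
     + ee 1 b s * Q2 bs s + ee 1 b s * Q2 bs s + ee 1 b s * Q2 bs s + ee 0 b s * Q3 bs s"

lemma term_der:
  assumes "(q has_vector_derivative q') (at s)"
  shows "((\<lambda>s. ee j b s * q s) has_vector_derivative ee j b s * q' + ee (j + 1) b s * q s) (at s)"
  using prod_der[OF ee_der assms] by simp

lemma Q_der:
  "(Q0 bs has_vector_derivative Q1 bs s) (at s) \<and>
   (Q1 bs has_vector_derivative Q2 bs s) (at s) \<and>
   (Q2 bs has_vector_derivative Q3 bs s) (at s)"
proof (induction bs arbitrary: s)
  case Nil
  have z: "((\<lambda>s. 0::sop) has_vector_derivative 0) (at s)" by (rule has_vector_derivative_const)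
  have o: "((\<lambda>s. 1::sop) has_vector_derivative 0) (at s)" by (rule has_vector_derivative_const)
  have "Q0 [] = (\<lambda>s. 1)" "Q1 [] = (\<lambda>s. 0)" "Q2 [] = (\<lambda>s. 0)" by (auto intro!: ext)
  then show ?case using z o by simp
next
  case (Cons b bs)
  have d0: "(Q0 bs has_vector_derivative Q1 bs s) (at s)"
   and d1: "(Q1 bs has_vector_derivative Q2 bs s) (at s)"
   and d2: "(Q2 bs has_vector_derivative Q3 bs s) (at s)" using Cons.IH by auto
  have e0: "Q0 (b # bs) = (\<lambda>s. ee 0 b s * Q0 bs s)" by (rule ext) simp
  have e1: "Q1 (b # bs) = (\<lambda>s. ee 1 b s * Q0 bs s + ee 0 b s * Q1 bs s)" by (rule ext) simp
  have e2: "Q2 (b # bs) = (\<lambda>s. ee 2 b s * Q0 bs s + ee 1 b s * Q1 bs s + ee 1 b s * Q1 bs s + ee 0 b s * Q2 bs s)"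
    by (rule ext) simp
  have t00: "((\<lambda>s. ee 0 b s * Q0 bs s) has_vector_derivative ee 0 b s * Q1 bs s + ee 1 b s * Q0 bs s) (at s)"
    using term_der[OF d0, of 0 b] by (simp add: numeral_2_eq_2 numeral_3_eq_3)
  have t10: "((\<lambda>s. ee 1 b s * Q0 bs s) has_vector_derivative ee 1 b s * Q1 bs s + ee 2 b s * Q0 bs s) (at s)"
    using term_der[OF d0, of 1 b] by (simp add: numeral_2_eq_2 numeral_3_eq_3)
  have t20: "((\<lambda>s. ee 2 b s * Q0 bs s) has_vector_derivative ee 2 b s * Q1 bs s + ee 3 b s * Q0 bs s) (at s)"
    using term_der[OF d0, of 2 b] by (simp add: numeral_2_eq_2 numeral_3_eq_3)
  have t01: "((\<lambda>s. ee 0 b s * Q1 bs s) has_vector_derivative ee 0 b s * Q2 bs s + ee 1 b s * Q1 bs s) (at s)"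
    using term_der[OF d1, of 0 b] by (simp add: numeral_2_eq_2 numeral_3_eq_3)
  have t11: "((\<lambda>s. ee 1 b s * Q1 bs s) has_vector_derivative ee 1 b s * Q2 bs s + ee 2 b s * Q1 bs s) (at s)"
    using term_der[OF d1, of 1 b] by (simp add: numeral_2_eq_2 numeral_3_eq_3)
  have t02: "((\<lambda>s. ee 0 b s * Q2 bs s) has_vector_derivative ee 0 b s * Q3 bs s + ee 1 b s * Q2 bs s) (at s)"
    using term_der[OF d2, of 0 b] by (simp add: numeral_2_eq_2 numeral_3_eq_3)
  note t00
  then have D0: "(Q0 (b # bs) has_vector_derivative Q1 (b # bs) s) (at s)"
    unfolding e0 by (simp add: add.commute)
  have "((\<lambda>s. ee 1 b s * Q0 bs s + ee 0 b s * Q1 bs s) has_vector_derivative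
      (ee 1 b s * Q1 bs s + ee 2 b s * Q0 bs s) + (ee 0 b s * Q2 bs s + ee 1 b s * Q1 bs s)) (at s)"
    by (intro has_vector_derivative_add t10 t01)
  then have D1: "(Q1 (b # bs) has_vector_derivative Q2 (b # bs) s) (at s)"
    unfolding e1 by (simp add: add_ac)
  have "((\<lambda>s. ee 2 b s * Q0 bs s + ee 1 b s * Q1 bs s + ee 1 b s * Q1 bs s + ee 0 b s * Q2 bs s) has_vector_derivative
      (ee 2 b s * Q1 bs s + ee 3 b s * Q0 bs s) + (ee 1 b s * Q2 bs s + ee 2 b s * Q1 bs s)
      + (ee 1 b s * Q2 bs s + ee 2 b s * Q1 bs s) + (ee 0 b s * Q3 bs s + ee 1 b s * Q2 bs s)) (at s)"
    by (intro has_vector_derivative_add t20 t11 t02)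
  then have D2: "(Q2 (b # bs) has_vector_derivative Q3 (b # bs) s) (at s)"
    unfolding e2 by (simp add: add_ac)
  show ?case using D0 D1 D2 by blast
qed

definition contr :: "sop \<Rightarrow> bool" where
  "contr b \<longleftrightarrow> (\<forall>s\<ge>0. bnd (app (exp (s *\<^sub>R b))) 1)"

lemma bnd_app_mult: "bnd (app x) a \<Longrightarrow> bnd (app y) c \<Longrightarrow> 0 \<le> a \<Longrightarrow> bnd (app (x * y)) (a * c)"
proof -
  assume "bnd (app x) a" "bnd (app y) c" "0 \<le> a"
  then have "bnd (\<lambda>X. app x (app y X)) (a * c)" by (rule bnd_comp)
  moreover have "app (x * y) = (\<lambda>X. app x (app y X))" by (rule ext) (simp add: app_mult)
  ultimately show ?thesis by simp
qed

lemma bnd_app_add: "bnd (app x) a \<Longrightarrow> bnd (app y) c \<Longrightarrow> bnd (app (x + y)) (a + c)"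
proof -
  assume "bnd (app x) a" "bnd (app y) c"
  then have "bnd (\<lambda>X. app x X + app y X) (a + c)" by (rule bnd_add)
  moreover have "app (x + y) = (\<lambda>X. app x X + app y X)" by (rule ext) (simp add: app_add)
  ultimately show ?thesis by simp
qed

lemma bnd_app_one: "bnd (app 1) 1"
proof -
  have "app 1 = (\<lambda>X. X)" by (rule ext) simp
  then show ?thesis using bnd_id by simp
qed

lemma bnd_app_zero:
  assumes "0 \<le> c" shows "bnd (app 0) c"
proof -
  have "app 0 = (\<lambda>X. 0)" by (rule ext) simp
  then show ?thesis using assms by (simp add: bnd_def tnf_nonneg)
qed

lemma bnd_power: "bnd (app b) c \<Longrightarrow> 0 \<le> c \<Longrightarrow> bnd (app (b ^ j)) (c ^ j)"
  by (induction j) (simp_all add: bnd_app_one bnd_app_mult)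

lemma bnd_ee: "bnd (app b) c \<Longrightarrow> 0 \<le> c \<Longrightarrow> contr b \<Longrightarrow> 0 \<le> s \<Longrightarrow> bnd (app (ee j b s)) (c ^ j)"
  unfolding ee_def contr_def using bnd_app_mult[of "exp (s *\<^sub>R b)" 1 "b ^ j" "c ^ j"] bnd_power
  by simp

lemma Q_bnd:
  assumes "list_all2 (\<lambda>b c. bnd (app b) c \<and> 0 \<le> c \<and> contr b) bs cs" "0 \<le> s"
  shows "bnd (app (Q0 bs s)) 1 \<and> bnd (app (Q1 bs s)) (sum_list cs) \<and>
         bnd (app (Q2 bs s)) ((sum_list cs)^2) \<and> bnd (app (Q3 bs s)) ((sum_list cs)^3)"
  using assms(1)
proof (induction bs arbitrary: cs)
  case Nil
  then show ?case using bnd_id by (simp add: bnd_def)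
next
  case (Cons b bs)
  obtain c cs' where cs: "cs = c # cs'" and hb: "bnd (app b) c" "0 \<le> c" "contr b"
    and rest: "list_all2 (\<lambda>b c. bnd (app b) c \<and> 0 \<le> c \<and> contr b) bs cs'"
    using Cons.prems by (cases cs) auto
  define a where "a = sum_list cs'"
  have a0: "0 \<le> a" using rest unfolding a_def
    by (induction bs cs' rule: list_all2_induct) auto
  have IH: "bnd (app (Q0 bs s)) 1" "bnd (app (Q1 bs s)) a" "bnd (app (Q2 bs s)) (a^2)" "bnd (app (Q3 bs s)) (a^3)"
    using Cons.IH[OF rest] by (auto simp: a_def)
  have E: "\<And>j. bnd (app (ee j b s)) (c ^ j)" using bnd_ee[OF hb assms(2)] by blast
  have c0: "\<And>j. 0 \<le> c ^ j" using hb(2) by simp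
  have T: "\<And>j q k. bnd (app q) k \<Longrightarrow> bnd (app (ee j b s * q)) (c ^ j * k)"
    using E c0 bnd_app_mult by blast
  have b0: "bnd (app (Q0 (b # bs) s)) 1"
    using T[OF IH(1), of 0] by simp
  have b1: "bnd (app (Q1 (b # bs) s)) (c + a)"
    using bnd_app_add[OF T[OF IH(1), of 1] T[OF IH(2), of 0]] by simp
  have b2: "bnd (app (Q2 (b # bs) s)) ((c + a)^2)"
  proof -
    have "bnd (app (Q2 (b # bs) s)) (c^2 * 1 + c^1 * a + c^1 * a + c^0 * a^2)"
      by (simp only: Q2.simps) (intro bnd_app_add T IH)
    moreover have "c^2 * 1 + c^1 * a + c^1 * a + c^0 * a^2 = (c + a)^2" by (simp add: power2_eq_square algebra_simps)
    ultimately show ?thesis by simp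
  qed
  have b3: "bnd (app (Q3 (b # bs) s)) ((c + a)^3)"
  proof -
    have "bnd (app (Q3 (b # bs) s)) (c^3 * 1 + c^2 * a + c^2 * a + c^2 * a + c^1 * a^2 + c^1 * a^2 + c^1 * a^2 + c^0 * a^3)"
      by (simp only: Q3.simps) (intro bnd_app_add T IH)
    moreover have "c^3 * 1 + c^2 * a + c^2 * a + c^2 * a + c^1 * a^2 + c^1 * a^2 + c^1 * a^2 + c^0 * a^3 = (c + a)^3"
      by (simp add: power3_eq_cube power2_eq_square algebra_simps)
    ultimately show ?thesis by simp
  qed
  show ?case using b0 b1 b2 b3 by (simp add: cs a_def)
qed

lemma Q_at0: "Q0 bs 0 = 1" "Q1 bs 0 = sum_list bs"
  by (induction bs) (simp_all add: ee_def)

lemma app_inj: "(\<And>X. app a X = app b X) \<Longrightarrow> a = b"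
  unfolding app_def sop_eq_iff by (rule blinfun_eqI) simp

lemma bl_trace_fun: "bounded_linear (\<lambda>Y::cmat2. Re (trace (W ** Y)))"
proof -
  have "linear (\<lambda>Y::cmat2. Re (trace (W ** Y)))"
    by (rule linearI) (simp_all add: mm_add_r trace_addm mm_scaleR_r trace_scaleR)
  then show ?thesis by (simp add: linear_conv_bounded_linear)
qed

lemma Q2_pal: "Q2 [a,b,c,d,d,c,b,a] 0 = (a+b+c+d+d+c+b+a) * (a+b+c+d+d+c+b+a)"
  by (simp add: ee_def Q_at0 algebra_simps power2_eq_square)

theorem lemma3:
  fixes H :: "complex^2^2" and A :: "complex^3^3"
    and lam :: "nat \<Rightarrow> real" and Ak :: "nat \<Rightarrow> complex^3^3" and v :: "nat \<Rightarrow> complex^3"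
    and Lhat :: "nat \<Rightarrow> superop" and Lam :: real and S2 :: "real \<Rightarrow> superop"
    and t :: real and N :: nat
  assumes herm: "cadj H = H"
    and A_psd: "psd A"
    and orthonormal: "\<forall>k\<in>{1,2,3}. \<forall>l\<in>{1,2,3}.
         (\<Sum>i\<in>UNIV. cnj (v k $ i) * v l $ i) = (if k = l then 1 else 0)"
    and proj: "\<forall>k\<in>{1,2,3}. Ak k = outer (v k)"
    and lam_nonneg: "\<forall>k\<in>{1,2,3}. lam k \<ge> 0"
    and spectral: "A = (\<Sum>k\<in>{1,2,3}. cscale (complex_of_real (lam k)) (Ak k))"
    and lam0: "lam 0 = 1"
    and Lhat0: "Lhat 0 = (\<lambda>\<rho>. cscale (complex_of_real (lam 0)) (L0 H \<rho>))"
    and Lhatk: "\<forall>k\<in>{1,2,3}. Lhat k = (\<lambda>\<rho>. cscale (complex_of_real (lam k)) (Lk (Ak k) \<rho>))"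
    and Lam_def: "Lam = Max ((\<lambda>k. norm11 (Lhat k)) ` {0,1,2,3})"
    and S2_def: "\<forall>\<alpha>\<ge>0. S2 \<alpha> =
         sexp (\<lambda>X. (\<alpha>/2) *\<^sub>R Lhat 0 X) \<circ> sexp (\<lambda>X. (\<alpha>/2) *\<^sub>R Lhat 1 X) \<circ>
         sexp (\<lambda>X. (\<alpha>/2) *\<^sub>R Lhat 2 X) \<circ> sexp (\<lambda>X. (\<alpha>/2) *\<^sub>R Lhat 3 X) \<circ>
         sexp (\<lambda>X. (\<alpha>/2) *\<^sub>R Lhat 3 X) \<circ> sexp (\<lambda>X. (\<alpha>/2) *\<^sub>R Lhat 2 X) \<circ>
         sexp (\<lambda>X. (\<alpha>/2) *\<^sub>R Lhat 1 X) \<circ> sexp (\<lambda>X. (\<alpha>/2) *\<^sub>R Lhat 0 X)"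
    and t_pos: "t > 0"
    and N_pos: "N \<ge> 1"
  shows "norm11 (\<lambda>X. sexp (\<lambda>Y. (t / real N) *\<^sub>R (\<Sum>k\<in>{0,1,2,3}. Lhat k Y)) X
                     - S2 (t / real N) X)
         \<le> (4 * t * Lam) ^ 3 / (3 * real N ^ 3)"
proof -
  define tau where "tau = t / real N"
  have tau0: "0 < tau" using t_pos N_pos by (simp add: tau_def)
  have Lk_fun: "Lk (outer w) = dissip (Vv w)" for w by (rule ext) (rule Lk_outer)
  have linL: "linear (Lhat k)" and dissL: "diss (Lhat k)" if k: "k \<in> {0,1,2,3}" for k
  proof -
    have "linear (Lhat k) \<and> diss (Lhat k)"
    proof (cases "k = 0")
      case True
      have "diss (\<lambda>X. cscale (complex_of_real 1) (L0 H X))" by (rule diss_cscale[OF diss_ham[OF herm]]) simp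
      then show ?thesis using True Lhat0 lam0 linear_cscale[OF linear_L0] by simp
    next
      case False
      then have k': "k \<in> {1,2,3}" using k by simp
      have h1: "Lhat k = (\<lambda>\<rho>. cscale (complex_of_real (lam k)) (Lk (Ak k) \<rho>))" using Lhatk k' by blast
      have h2: "Ak k = outer (v k)" using proj k' by blast
      have "Lhat k = (\<lambda>\<rho>. cscale (complex_of_real (lam k)) (dissip (Vv (v k)) \<rho>))"
        unfolding h1 h2 Lk_fun ..
      moreover have "0 \<le> lam k" using lam_nonneg k' by blast
      ultimately show ?thesis using linear_cscale[OF linear_dissip] diss_cscale[OF diss_dissip] by simp
    qed
    then show "linear (Lhat k)" "diss (Lhat k)" by auto
  qed
  define Lf where "Lf = (\<lambda>Y. \<Sum>k\<in>{0,1,2,3::nat}. Lhat k Y)"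
  have linLf: "linear Lf" unfolding Lf_def by (rule linear_sum_fun) (rule linL)
  have dissLf: "diss Lf" unfolding Lf_def by (rule diss_sum) (auto intro: dissL)
  define M where "M k = mk (Lhat k)" for k
  have appM: "app (M k) = Lhat k" if "k \<in> {0,1,2,3}" for k
    using that by (simp add: M_def app_mk linL)
  define Ls where "Ls = mk Lf"
  have appLs: "app Ls = Lf" by (simp add: Ls_def app_mk linLf)
  define c where "c k = (1/2::real) *\<^sub>R M k" for k
  define bs where "bs = [c 0, c 1, c 2, c 3, c 3, c 2, c 1, c (0::nat)]"
  define nk where "nk k = norm11 (Lhat k)" for k
  have bndL: "bnd (Lhat k) (nk k)" if "k \<in> {0,1,2,3}" for k
    using that by (simp add: nk_def norm11_bnd linL)
  have nk0: "0 \<le> nk k" if "k \<in> {0,1,2,3}" for k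
    using that by (simp add: nk_def norm11_nonneg linL)
  have nkL: "nk k \<le> Lam" if "k \<in> {0,1,2,3}" for k
    unfolding Lam_def nk_def using that by (intro Max_ge) auto
  define lL where "lL = nk 0 + nk 1 + nk 2 + nk 3"
  have lL0: "0 \<le> lL" using nk0 by (simp add: lL_def)
  have lL4: "lL \<le> 4 * Lam" using nkL[of 0] nkL[of 1] nkL[of 2] nkL[of 3] by (simp add: lL_def)
  have sumbs1: "sum_list bs = (1/2::real) *\<^sub>R (M 0 + M 1 + M 2 + M 3) + (1/2::real) *\<^sub>R (M 0 + M 1 + M 2 + M 3)"
    by (simp add: bs_def c_def scaleR_add_right add_ac)
  have sumbs2: "(1/2::real) *\<^sub>R (M 0 + M 1 + M 2 + M 3) + (1/2::real) *\<^sub>R (M 0 + M 1 + M 2 + M 3) = M 0 + M 1 + M 2 + M 3"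
    by (simp only: scaleR_add_left[symmetric]) simp
  have sumbs3: "M 0 + M 1 + M 2 + M 3 = Ls"
  proof (rule app_inj)
    fix X
    show "app (M 0 + M 1 + M 2 + M 3) X = app Ls X"
      by (simp add: app_add appM appLs Lf_def add_ac)
  qed
  have sumbs: "sum_list bs = Ls" using sumbs1 sumbs2 sumbs3 by simp
  have sl: "c 0 + c 1 + c 2 + c 3 + c 3 + c 2 + c 1 + c 0 = Ls"
    using sumbs by (simp add: bs_def add.assoc)
  have Q2_0: "Q2 bs 0 = Ls * Ls"
    unfolding bs_def Q2_pal sl ..
  have bLs: "bnd (app Ls) lL"
  proof -
    have "bnd (\<lambda>Y. \<Sum>k\<in>{0,1,2,3::nat}. Lhat k Y) (\<Sum>k\<in>{0,1,2,3::nat}. nk k)"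
      by (rule bnd_sum) (auto intro: bndL)
    then show ?thesis by (simp add: appLs Lf_def lL_def add.assoc)
  qed
  have contrLs: "bnd (app (exp (s *\<^sub>R Ls))) 1" if "0 \<le> s" for s
    unfolding bnd_def Ls_def using contraction[OF linLf dissLf that] by simp
  have bc: "bnd (app (c k)) (nk k / 2) \<and> 0 \<le> nk k / 2 \<and> contr (c k)" if k: "k \<in> {0,1,2,3}" for k
  proof -
    have "app (c k) = (\<lambda>X. (1/2::real) *\<^sub>R Lhat k X)" by (rule ext) (simp add: c_def app_scaleR appM[OF k])
    then have b1: "bnd (app (c k)) (nk k / 2)" using bnd_scaleR[OF bndL[OF k], of "1/2"] by simp
    have "contr (c k)" unfolding contr_def
    proof (intro allI impI)
      fix s :: real assume "0 \<le> s"
      have "exp (s *\<^sub>R c k) = exp ((s/2) *\<^sub>R mk (Lhat k))" by (simp add: c_def M_def)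
      then show "bnd (app (exp (s *\<^sub>R c k))) 1"
        unfolding bnd_def using contraction[OF linL[OF k] dissL[OF k], of "s/2"] \<open>0 \<le> s\<close> by simp
    qed
    then show ?thesis using b1 nk0[OF k] by simp
  qed
  define cs where "cs = [nk 0/2, nk 1/2, nk 2/2, nk 3/2, nk 3/2, nk 2/2, nk 1/2, nk (0::nat)/2]"
  have la: "list_all2 (\<lambda>b c. bnd (app b) c \<and> 0 \<le> c \<and> contr b) bs cs"
    unfolding bs_def cs_def using bc by simp
  have sumcs: "sum_list cs = lL" by (simp add: cs_def lL_def)
  have sexp_fun: "sexp (app a) = app (exp a)" for a by (rule ext) (simp add: app_exp)
  have E1: "sexp (\<lambda>Y. tau *\<^sub>R (\<Sum>k\<in>{0,1,2,3}. Lhat k Y)) = app (exp (tau *\<^sub>R Ls))"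
  proof -
    have "(\<lambda>Y. tau *\<^sub>R (\<Sum>k\<in>{0,1,2,3}. Lhat k Y)) = app (tau *\<^sub>R Ls)"
      by (rule ext) (simp add: app_scaleR appLs Lf_def)
    then show ?thesis by (simp add: sexp_fun)
  qed
  have Ek: "sexp (\<lambda>X. (tau/2) *\<^sub>R Lhat k X) = app (exp (tau *\<^sub>R c k))" if "k \<in> {0,1,2,3}" for k
  proof -
    have "(\<lambda>X. (tau/2) *\<^sub>R Lhat k X) = app (tau *\<^sub>R c k)"
      by (rule ext) (simp add: app_scaleR c_def appM[OF that])
    then show ?thesis by (simp add: sexp_fun)
  qed
  have E0: "sexp (\<lambda>X. (tau/2) *\<^sub>R Lhat 0 X) = app (exp (tau *\<^sub>R c 0))" by (rule Ek) simp
  have E1': "sexp (\<lambda>X. (tau/2) *\<^sub>R Lhat 1 X) = app (exp (tau *\<^sub>R c 1))" by (rule Ek) simp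
  have E2: "sexp (\<lambda>X. (tau/2) *\<^sub>R Lhat 2 X) = app (exp (tau *\<^sub>R c 2))" by (rule Ek) simp
  have E3: "sexp (\<lambda>X. (tau/2) *\<^sub>R Lhat 3 X) = app (exp (tau *\<^sub>R c 3))" by (rule Ek) simp
  have S2f: "S2 tau = app (exp (tau *\<^sub>R c 0)) \<circ> app (exp (tau *\<^sub>R c 1)) \<circ> app (exp (tau *\<^sub>R c 2)) \<circ>
      app (exp (tau *\<^sub>R c 3)) \<circ> app (exp (tau *\<^sub>R c 3)) \<circ> app (exp (tau *\<^sub>R c 2)) \<circ>
      app (exp (tau *\<^sub>R c 1)) \<circ> app (exp (tau *\<^sub>R c 0))"
    unfolding S2_def[rule_format, OF less_imp_le[OF tau0]] E0 E1' E2 E3 ..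
  have S2e: "S2 tau X = app (Q0 bs tau) X" for X
    unfolding S2f bs_def by (simp add: ee_def app_mult)
  define Err where "Err = exp (tau *\<^sub>R Ls) - Q0 bs tau"
  have Erre: "(\<lambda>X. sexp (\<lambda>Y. (t / real N) *\<^sub>R (\<Sum>k\<in>{0,1,2,3}. Lhat k Y)) X - S2 (t / real N) X) = app Err"
    by (rule ext) (simp only: tau_def[symmetric] E1 S2e Err_def app_diff)
  define C where "C = (4 * t * Lam) ^ 3 / (3 * real N ^ 3)"
  have "bnd (app Err) C"
    unfolding bnd_def
  proof
    fix X
    obtain W where W: "cadj W ** W = mat 1" "Re (trace (W ** app Err X)) = tnf (app Err X)"
      using tnf_attain by blast
    define l where "l a = Re (trace (W ** app a X))" for a
    have bl: "bounded_linear l"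
      unfolding l_def using bounded_linear_compose[OF bl_trace_fun bl_app] by simp
    define F where "F m s = exp (s *\<^sub>R Ls) * Ls ^ m -
        (if m = 0 then Q0 bs s else if m = 1 then Q1 bs s else if m = 2 then Q2 bs s else Q3 bs s)" for m s
    have der: "(F m has_vector_derivative F (Suc m) s) (at s)" if "m < 3" for m s
    proof -
      have "((\<lambda>s. exp (s *\<^sub>R Ls) * Ls ^ m) has_vector_derivative (exp (s *\<^sub>R Ls) * Ls) * Ls ^ m) (at s)"
        by (rule has_vector_derivative_mult_left[OF exp_scaleR_has_vector_derivative_right])
      then have dE: "((\<lambda>s. exp (s *\<^sub>R Ls) * Ls ^ m) has_vector_derivative exp (s *\<^sub>R Ls) * Ls ^ Suc m) (at s)"
        by (simp add: mult.assoc)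
      have dQ: "((\<lambda>s. if m = 0 then Q0 bs s else if m = 1 then Q1 bs s else if m = 2 then Q2 bs s else Q3 bs s)
          has_vector_derivative (if Suc m = 0 then Q0 bs s else if Suc m = 1 then Q1 bs s else if Suc m = 2 then Q2 bs s else Q3 bs s)) (at s)"
      proof -
        have "m = 0 \<or> m = 1 \<or> m = 2" using that by auto
        moreover have "(Q0 bs has_vector_derivative Q1 bs s) (at s)" "(Q1 bs has_vector_derivative Q2 bs s) (at s)"
          "(Q2 bs has_vector_derivative Q3 bs s) (at s)" using Q_der by auto
        ultimately show ?thesis by auto
      qed
      have "((\<lambda>s. exp (s *\<^sub>R Ls) * Ls ^ m - (if m = 0 then Q0 bs s else if m = 1 then Q1 bs s else if m = 2 then Q2 bs s else Q3 bs s))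
          has_vector_derivative F (Suc m) s) (at s)"
        unfolding F_def by (rule has_vector_derivative_diff[OF dE dQ])
      moreover have "F m = (\<lambda>s. exp (s *\<^sub>R Ls) * Ls ^ m - (if m = 0 then Q0 bs s else if m = 1 then Q1 bs s else if m = 2 then Q2 bs s else Q3 bs s))"
        by (rule ext) (simp add: F_def)
      ultimately show ?thesis by simp
    qed
    obtain xi where xi: "0 < xi" "xi < tau"
      "l (F 0 tau) = l (F 0 0) + l (F 1 0) * tau + l (F 2 0) / 2 * tau^2 + l (F 3 xi) / 6 * tau^3"
      using taylor3_sop[where F=F and l=l and x=tau, OF bl der tau0] by blast
    have F00: "F 0 0 = 0" by (simp add: F_def Q_at0)
    have F10: "F 1 0 = 0" by (simp add: F_def Q_at0 sumbs)
    have F20: "F 2 0 = 0" by (simp add: F_def Q2_0 power2_eq_square)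
    have lz: "l 0 = 0" by (rule linear_0[OF bounded_linear.linear[OF bl]])
    have lF0: "l (F 0 tau) = tnf (app Err X)" using W(2) by (simp add: F_def l_def Err_def)
    have key: "tnf (app Err X) = l (F 3 xi) / 6 * tau^3"
      using xi(3) unfolding lF0 F00 F10 F20 lz by simp
    have bF3: "bnd (app (F 3 xi)) (lL^3 + lL^3)"
    proof -
      have b1: "bnd (app (exp (xi *\<^sub>R Ls) * Ls ^ 3)) (1 * lL^3)"
        by (rule bnd_app_mult[OF contrLs bnd_power[OF bLs lL0]]) (use xi in auto)
      have b2: "bnd (app (Q3 bs xi)) (lL^3)" using Q_bnd[OF la, of xi] xi sumcs by simp
      have "bnd (\<lambda>Y. app (exp (xi *\<^sub>R Ls) * Ls ^ 3) Y - app (Q3 bs xi) Y) (1 * lL^3 + lL^3)"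
        by (rule bnd_diff[OF b1 b2])
      moreover have "app (F 3 xi) = (\<lambda>Y. app (exp (xi *\<^sub>R Ls) * Ls ^ 3) Y - app (Q3 bs xi) Y)"
        by (rule ext) (simp add: F_def app_diff)
      ultimately show ?thesis by simp
    qed
    have "\<bar>l (F 3 xi)\<bar> \<le> tnf (app (F 3 xi) X)" unfolding l_def by (rule abs_Re_trace_unitary[OF W(1)])
    also have "\<dots> \<le> (lL^3 + lL^3) * tnf X" using bF3 unfolding bnd_def by blast
    finally have lb: "\<bar>l (F 3 xi)\<bar> \<le> (lL^3 + lL^3) * tnf X" .
    have "tnf (app Err X) \<le> \<bar>l (F 3 xi)\<bar> / 6 * tau^3" unfolding key using tau0
      by (intro mult_right_mono divide_right_mono) auto
    also have "\<dots> \<le> (lL^3 + lL^3) * tnf X / 6 * tau^3" using lb tau0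
      by (intro mult_right_mono divide_right_mono) auto
    also have "\<dots> \<le> ((4 * Lam)^3 + (4 * Lam)^3) * tnf X / 6 * tau^3"
    proof -
      have "lL^3 \<le> (4 * Lam)^3" using lL4 lL0 by (rule power_mono)
      then show ?thesis using tau0 tnf_nonneg[of X]
        by (intro mult_right_mono divide_right_mono) auto
    qed
    also have "\<dots> = C * tnf X"
      using N_pos by (simp add: C_def tau_def power_divide power_mult_distrib field_simps)
    finally show "tnf (app Err X) \<le> C * tnf X" .
  qed
  then have "norm11 (app Err) \<le> C" by (rule norm11_le)
  then show ?thesis unfolding Erre C_def .
qed

end
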